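(* Let $f\in\mathcal{B}^\Sigma_{d,n}$, $b\in\mathcal{B}^\Sigma_{d,m}$ and $a\in\mathcal{B}^\Sigma_{e,n+m}$, and write $\Delta(a)=\sum a^{(1)}\otimes a^{(2)}$. Then $a*(b\cdot f)=\sum (a^{(1)}*b)\cdot(a^{(2)}*f)$, i.e. $a*(b\cdot f)$ is the image of $\Delta(a)*(b\otimes f)\in\mathcal{B}^\Sigma\otimes\mathcal{B}^\Sigma$ under the multiplication map $u\otimes v\mapsto u\cdot v$.
   Context: Let $\mathbf{k}$ be a field of characteristic $0$ and $B=\bigoplus_{d\ge0}B_d$ a commutative graded $\mathbf{k}$-algebra with $B_0=\mathbf{k}$, generated by $B_1$, $\dim B_1<\infty$. $\mathcal{B}^\Sigma_{d,n}=(B_d^{\otimes n})^{\Sigma_n}$ ($\Sigma_n$ permuting factors), $\mathcal{B}^\Sigma=\bigoplus_{n,d}\mathcal{B}^\Sigma_{d,n}$. For $f\in\mathcal{B}^\Sigma_{d,n}$, $g\in\mathcal{B}^\Sigma_{d,m}$, $f\cdot g=\sum_\sigma f\cdot_\sigma g$ where $\sigma$ ranges over subsets $\{i_1<\cdots<i_n\}\subseteq[n+m]$ and $f\cdot_\sigma g$ places the factors of $f$ in positions $i_1,\dots,i_n$ and those of $g$ in the remaining positions in order; $\cdot$ is zero between different $d$. $*:\mathcal{B}^\Sigma_{d,n}\otimes\mathcal{B}^\Sigma_{e,n}\to\mathcal{B}^\Sigma_{d+e,n}$ is factorwise multiplication in $B$, zero for different $n$. $\Delta:\mathcal{B}^\Sigma\to\mathcal{B}^\Sigma\otimes\mathcal{B}^\Sigma$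 is the unique $\cdot$-algebra homomorphism with $\Delta(w)=1\otimes w+w\otimes1$ for $w\in B_d=\mathcal{B}^\Sigma_{d,1}$ (each $\bigoplus_n\mathcal{B}^\Sigma_{d,n}$ being a free divided power algebra on $B_d$). $*$ is extended componentwise to $\mathcal{B}^\Sigma\otimes\mathcal{B}^\Sigma$: $(a'\otimes a'')*(b\otimes f)=(a'*b)\otimes(a''*f)$. *)

theory Defs
  imports Main "HOL-Combinatorics.Permutations"
begin

text \<open>B is modelled as a commutative ring type 'b together with a scalar
action smul of the field 'k (characteristic 0) and the family of homogeneous
components Bd :: nat => 'b set.\<close>

inductive_set kspan :: "('k \<Rightarrow> 'b::comm_ring_1 \<Rightarrow> 'b) \<Rightarrow> 'b set \<Rightarrow> 'b set"
  for smul S where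
  kspan_zero: "0 \<in> kspan smul S"
| kspan_base: "x \<in> S \<Longrightarrow> x \<in> kspan smul S"
| kspan_add: "x \<in> kspan smul S \<Longrightarrow> y \<in> kspan smul S \<Longrightarrow> x + y \<in> kspan smul S"
| kspan_smul: "x \<in> kspan smul S \<Longrightarrow> smul c x \<in> kspan smul S"

inductive_set subalg :: "('k \<Rightarrow> 'b::comm_ring_1 \<Rightarrow> 'b) \<Rightarrow> 'b set \<Rightarrow> 'b set"
  for smul S where
  subalg_scalar: "smul c 1 \<in> subalg smul S"
| subalg_base: "x \<in> S \<Longrightarrow> x \<in> subalg smul S"
| subalg_add: "x \<in> subalg smul S \<Longrightarrow> y \<in> subalg smul S \<Longrightarrow> x + y \<in> subalg smul S"
| subalg_mult: "x \<in> subalg smul S \<Longrightarrow> y \<in> subalg smul S \<Longrightarrow> x * y \<in> subalg smul S"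
| subalg_smul: "x \<in> subalg smul S \<Longrightarrow> smul c x \<in> subalg smul S"

definition graded_alg :: "('k::field_char_0 \<Rightarrow> 'b::comm_ring_1 \<Rightarrow> 'b) \<Rightarrow> (nat \<Rightarrow> 'b set) \<Rightarrow> bool" where
  "graded_alg smul Bd \<longleftrightarrow>
     \<comment> \<open>k-algebra structure\<close>
     (\<forall>c x y. smul c (x + y) = smul c x + smul c y) \<and>
     (\<forall>c c' x. smul (c + c') x = smul c x + smul c' x) \<and>
     (\<forall>c c' x. smul (c * c') x = smul c (smul c' x)) \<and>
     (\<forall>x. smul 1 x = x) \<and>
     (\<forall>c x y. smul c (x * y) = smul c x * y) \<and>
     \<comment> \<open>each B_i is a k-subspace\<close>
     (\<forall>i. 0 \<in> Bd i \<and> (\<forall>x\<in>Bd i. \<forall>y\<in>Bd i. x + y \<in> Bd i) \<and> (\<forall>c. \<forall>x\<in>Bd i. smul c x \<in> Bd i)) \<and>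
     \<comment> \<open>grading is multiplicative\<close>
     (\<forall>i j. \<forall>x\<in>Bd i. \<forall>y\<in>Bd j. x * y \<in> Bd (i + j)) \<and>
     \<comment> \<open>B is the direct sum of the B_i\<close>
     (\<forall>x. \<exists>N xs. (\<forall>i<N. xs i \<in> Bd i) \<and> x = (\<Sum>i<N. xs i)) \<and>
     (\<forall>N xs. (\<forall>i<N. xs i \<in> Bd i) \<and> (\<Sum>i<N. xs i) = 0 \<longrightarrow> (\<forall>i<N. xs i = 0)) \<and>
     \<comment> \<open>B_0 = k\<close>
     Bd 0 = range (\<lambda>c. smul c 1) \<and> (1::'b) \<noteq> 0 \<and>
     \<comment> \<open>B is generated by B_1, and B_1 is finite-dimensional\<close>
     subalg smul (Bd 1) = UNIV \<and>
     (\<exists>F. finite F \<and> F \<subseteq> Bd 1 \<and> Bd 1 \<subseteq> kspan smul F)"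

text \<open>An element of a tensor power is represented as a formal linear
combination of pure tensors: a list of pairs (coefficient, word), the word
[x_1,...,x_n] standing for x_1 (x) ... (x) x_n.  Elements of the tensor
product of two such spaces are lists of triples (coefficient, word, word).\<close>

type_synonym ('k, 'b) tens = "('k \<times> 'b list) list"
type_synonym ('k, 'b) tens2 = "('k \<times> 'b list \<times> 'b list) list"

definition tens_in :: "(nat \<Rightarrow> 'b set) \<Rightarrow> nat \<Rightarrow> nat \<Rightarrow> ('k, 'b) tens \<Rightarrow> bool" where
  "tens_in Bd d n t \<longleftrightarrow> (\<forall>(c, w)\<in>set t. length w = n \<and> set w \<subseteq> Bd d)"

definition tens2_in :: "(nat \<Rightarrow> 'b set) \<Rightarrow> nat \<Rightarrow> ('k, 'b) tens2 \<Rightarrow> bool" where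
  "tens2_in Bd d x \<longleftrightarrow> (\<forall>(c, u, v)\<in>set x. set u \<subseteq> Bd d \<and> set v \<subseteq> Bd d)"

definition lin_fun :: "('k::field \<Rightarrow> 'b::comm_ring_1 \<Rightarrow> 'b) \<Rightarrow> (nat \<Rightarrow> 'b set) \<Rightarrow> nat \<Rightarrow> ('b \<Rightarrow> 'k) \<Rightarrow> bool" where
  "lin_fun smul Bd d \<phi> \<longleftrightarrow>
     (\<forall>x\<in>Bd d. \<forall>y\<in>Bd d. \<phi> (x + y) = \<phi> x + \<phi> y) \<and> (\<forall>c. \<forall>x\<in>Bd d. \<phi> (smul c x) = c * \<phi> x)"

definition tens_eval :: "(nat \<Rightarrow> 'b \<Rightarrow> 'k::field) \<Rightarrow> ('k, 'b) tens \<Rightarrow> 'k" where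
  "tens_eval \<phi>s t = sum_list (map (\<lambda>(c, w). c * (\<Prod>i<length w. \<phi>s i (w ! i))) t)"

text \<open>Equality in B_d^{(x) n}: two formal combinations represent the same
tensor iff they agree under all products of linear functionals
(these separate points of a tensor product of vector spaces).\<close>
definition teq :: "('k::field \<Rightarrow> 'b::comm_ring_1 \<Rightarrow> 'b) \<Rightarrow> (nat \<Rightarrow> 'b set) \<Rightarrow> nat \<Rightarrow> nat
                    \<Rightarrow> ('k, 'b) tens \<Rightarrow> ('k, 'b) tens \<Rightarrow> bool" where
  "teq smul Bd d n t t' \<longleftrightarrow> tens_in Bd d n t \<and> tens_in Bd d n t' \<and>
     (\<forall>\<phi>s. (\<forall>i<n. lin_fun smul Bd d (\<phi>s i)) \<longrightarrow> tens_eval \<phi>s t = tens_eval \<phi>s t')"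

text \<open>Equality in the tensor product of (direct sums of) tensor powers of
B_d: componentwise in each bidegree (p,q), the (p,q) component being
identified with B_d^{(x)(p+q)}.\<close>
definition tens2_eval :: "nat \<Rightarrow> nat \<Rightarrow> (nat \<Rightarrow> 'b \<Rightarrow> 'k::field) \<Rightarrow> ('k, 'b) tens2 \<Rightarrow> 'k" where
  "tens2_eval p q \<phi>s x = sum_list (map (\<lambda>(c, u, v).
       if length u = p \<and> length v = q then c * (\<Prod>i<p + q. \<phi>s i ((u @ v) ! i)) else 0) x)"

definition teq2 :: "('k::field \<Rightarrow> 'b::comm_ring_1 \<Rightarrow> 'b) \<Rightarrow> (nat \<Rightarrow> 'b set) \<Rightarrow> nat
                    \<Rightarrow> ('k, 'b) tens2 \<Rightarrow> ('k, 'b) tens2 \<Rightarrow> bool" where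
  "teq2 smul Bd d x y \<longleftrightarrow> tens2_in Bd d x \<and> tens2_in Bd d y \<and>
     (\<forall>p q \<phi>s. (\<forall>i<p + q. lin_fun smul Bd d (\<phi>s i)) \<longrightarrow> tens2_eval p q \<phi>s x = tens2_eval p q \<phi>s y)"

definition perm_t :: "(nat \<Rightarrow> nat) \<Rightarrow> ('k, 'b) tens \<Rightarrow> ('k, 'b) tens" where
  "perm_t \<sigma> t = map (\<lambda>(c, w). (c, map (\<lambda>i. w ! \<sigma> i) [0..<length w])) t"

definition Sym :: "('k::field \<Rightarrow> 'b::comm_ring_1 \<Rightarrow> 'b) \<Rightarrow> (nat \<Rightarrow> 'b set) \<Rightarrow> nat \<Rightarrow> nat \<Rightarrow> ('k, 'b) tens set" where
  "Sym smul Bd d n = {t. tens_in Bd d n t \<and>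
      (\<forall>\<sigma>. \<sigma> permutes {..<n} \<longrightarrow> teq smul Bd d n (perm_t \<sigma> t) t)}"

text \<open>merge bs u v: bs is the indicator of a subset of positions; the
factors of u are put (in order) at the True positions, those of v at the
False positions.\<close>
fun merge :: "bool list \<Rightarrow> 'b list \<Rightarrow> 'b list \<Rightarrow> 'b list" where
  "merge [] xs ys = []"
| "merge (True # bs) (x # xs) ys = x # merge bs xs ys"
| "merge (True # bs) [] ys = []"
| "merge (False # bs) xs (y # ys) = y # merge bs xs ys"
| "merge (False # bs) xs [] = []"

definition sel :: "nat \<Rightarrow> nat \<Rightarrow> bool list list" where
  "sel n m = filter (\<lambda>bs. count_list bs True = n) (List.n_lists (n + m) [True, False])"

text \<open>The shuffle product f . g = sum over sigma of f ._sigma g.\<close>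
definition shuf :: "('k::times, 'b) tens \<Rightarrow> ('k, 'b) tens \<Rightarrow> ('k, 'b) tens" where
  "shuf f g = concat (map (\<lambda>((c, u), (c', v)).
       map (\<lambda>bs. (c * c', merge bs u v)) (sel (length u) (length v))) (List.product f g))"

text \<open>The factorwise product *, zero between different numbers of factors.\<close>
definition star :: "('k::times, 'b::times) tens \<Rightarrow> ('k, 'b) tens \<Rightarrow> ('k, 'b) tens" where
  "star t t' = concat (map (\<lambda>((c, u), (c', v)).
       if length u = length v then [(c * c', map2 (*) u v)] else []) (List.product t t'))"

definition mult2 :: "('k::comm_monoid_mult, 'b) tens2 \<Rightarrow> ('k, 'b) tens2 \<Rightarrow> ('k, 'b) tens2" where
  "mult2 x y = concat (map (\<lambda>((c, u, v), (c', u', v')).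
       concat (map (\<lambda>((e1, w1), (e2, w2)). [(c * c' * e1 * e2, w1, w2)])
         (List.product (shuf [(1, u)] [(1, u')]) (shuf [(1, v)] [(1, v')]))))
     (List.product x y))"

definition star2 :: "('k::comm_monoid_mult, 'b::times) tens2 \<Rightarrow> ('k, 'b) tens \<Rightarrow> ('k, 'b) tens \<Rightarrow> ('k, 'b) tens2" where
  "star2 x b f = concat (map (\<lambda>(c, u, v).
       concat (map (\<lambda>((c1, w1), (c2, w2)). [(c * c1 * c2, w1, w2)])
         (List.product (star [(1, u)] b) (star [(1, v)] f)))) x)"

definition mu :: "('k::comm_monoid_mult, 'b) tens2 \<Rightarrow> ('k, 'b) tens" where
  "mu x = concat (map (\<lambda>(c, u, v). shuf [(c, u)] [(1, v)]) x)"

definition scale_t :: "'k::times \<Rightarrow> ('k, 'b) tens \<Rightarrow> ('k, 'b) tens" where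
  "scale_t a t = map (\<lambda>(c, w). (a * c, w)) t"

definition scale_t2 :: "'k::times \<Rightarrow> ('k, 'b) tens2 \<Rightarrow> ('k, 'b) tens2" where
  "scale_t2 a x = map (\<lambda>(c, u, v). (a * c, u, v)) x"

text \<open>These conditions determine Delta
uniquely (up to equality of tensors).\<close>
definition is_Delta :: "('k::field \<Rightarrow> 'b::comm_ring_1 \<Rightarrow> 'b) \<Rightarrow> (nat \<Rightarrow> 'b set)
                        \<Rightarrow> (('k, 'b) tens \<Rightarrow> ('k, 'b) tens2) \<Rightarrow> bool" where
  "is_Delta smul Bd D \<longleftrightarrow> (\<forall>d.
     (\<forall>n. \<forall>x\<in>Sym smul Bd d n. tens2_in Bd d (D x)) \<and>
     (\<forall>n. \<forall>x\<in>Sym smul Bd d n. \<forall>y\<in>Sym smul Bd d n. teq smul Bd d n x y \<longrightarrow> teq2 smul Bd d (D x) (D y)) \<and>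
     (\<forall>n. \<forall>x\<in>Sym smul Bd d n. \<forall>y\<in>Sym smul Bd d n. teq2 smul Bd d (D (x @ y)) (D x @ D y)) \<and>
     (\<forall>n a. \<forall>x\<in>Sym smul Bd d n. teq2 smul Bd d (D (scale_t a x)) (scale_t2 a (D x))) \<and>
     teq2 smul Bd d (D [(1, [])]) [(1, [], [])] \<and>
     (\<forall>w\<in>Bd d. teq2 smul Bd d (D [(1, [w])]) [(1, [], [w]), (1, [w], [])]) \<and>
     (\<forall>n n'. \<forall>x\<in>Sym smul Bd d n. \<forall>y\<in>Sym smul Bd d n'.
        teq2 smul Bd d (D (shuf x y)) (mult2 (D x) (D y))))"

end

theory Submission
  imports Defs
begin


definition pl :: "('b \<Rightarrow> 'k::comm_ring_1) list \<Rightarrow> 'b list \<Rightarrow> 'k" where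
  "pl L w = prod_list (map2 (\<lambda>\<phi> x. \<phi> x) L w)"

definition gl :: "('b \<Rightarrow> 'k::comm_ring_1) list \<Rightarrow> 'b list \<Rightarrow> 'k" where
  "gl L w = (if length w = length L then pl L w else 0)"

definition EvG :: "('b list \<Rightarrow> 'k::comm_ring_1) \<Rightarrow> ('k, 'b) tens \<Rightarrow> 'k" where
  "EvG G t = sum_list (map (\<lambda>(c, w). c * G w) t)"

definition Ev :: "('k::comm_ring_1, 'b) tens \<Rightarrow> ('b \<Rightarrow> 'k) list \<Rightarrow> 'k" where
  "Ev t L = EvG (gl L) t"

definition E2 :: "('k::comm_ring_1, 'b) tens2 \<Rightarrow> ('b \<Rightarrow> 'k) list \<Rightarrow> ('b \<Rightarrow> 'k) list \<Rightarrow> 'k" where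
  "E2 X L M = sum_list (map (\<lambda>(c, u, v). c * gl L u * gl M v) X)"

fun pick :: "'a list \<Rightarrow> bool list \<Rightarrow> bool \<Rightarrow> 'a list" where
  "pick (x # xs) (b # bs) t = (if b = t then x # pick xs bs t else pick xs bs t)"
| "pick _ _ t = []"

lemma pl_Nil[simp]: "pl [] w = 1" "pl L [] = 1" by (auto simp: pl_def)
lemma pl_Cons[simp]: "pl (\<phi> # L) (x # w) = \<phi> x * pl L w" by (simp add: pl_def)

lemma EvG_append[simp]: "EvG G (s @ t) = EvG G s + EvG G t" by (simp add: EvG_def)
lemma EvG_Cons[simp]: "EvG G ((c, w) # t) = c * G w + EvG G t" by (simp add: EvG_def)
lemma EvG_Nil[simp]: "EvG G [] = 0" by (simp add: EvG_def)
lemma EvG_concat: "EvG G (concat ts) = sum_list (map (EvG G) ts)"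
  by (induction ts) auto

lemma E2_append[simp]: "E2 (s @ t) L M = E2 s L M + E2 t L M" by (simp add: E2_def)
lemma E2_Cons[simp]: "E2 ((c, u, v) # t) L M = c * gl L u * gl M v + E2 t L M" by (simp add: E2_def)
lemma E2_Nil[simp]: "E2 [] L M = 0" by (simp add: E2_def)
lemma E2_concat: "E2 (concat ts) L M = sum_list (map (\<lambda>t. E2 t L M) ts)"
  by (induction ts) auto

lemma length_pick: "length bs = length L \<Longrightarrow> length (pick L bs t) = count_list bs t"
  by (induction L bs t rule: pick.induct) auto

lemma set_pick: "set (pick L bs t) \<subseteq> set L"
  by (induction L bs t rule: pick.induct) auto

lemma count_TF: "set bs \<subseteq> {True, False} \<Longrightarrow> count_list bs True + count_list bs False = length bs"
  by (induction bs) auto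

lemma count_TF': "count_list bs True + count_list bs False = length (bs::bool list)"
  by (induction bs) auto

lemma length_merge: "count_list bs True = length u \<Longrightarrow> count_list bs False = length v
   \<Longrightarrow> length (merge bs u v) = length bs"
proof (induction bs arbitrary: u v)
  case Nil then show ?case by simp
next
  case (Cons b bs)
  show ?case
  proof (cases b)
    case True
    with Cons obtain x u' where "u = x # u'" by (cases u) auto
    with Cons True show ?thesis by auto
  next
    case False
    with Cons obtain x v' where "v = x # v'" by (cases v) auto
    with Cons False show ?thesis by auto
  qed
qed

lemma set_merge: "set (merge bs u v) \<subseteq> set u \<union> set v"
  by (induction bs u v rule: merge.induct) auto

lemma pl_merge: "count_list bs True = length u \<Longrightarrow> count_list bs False = length v \<Longrightarrow>
  length L = length bs \<Longrightarrow>
  pl L (merge bs u v) = pl (pick L bs True) u * pl (pick L bs False) v"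
proof (induction bs arbitrary: u v L)
  case Nil then show ?case by simp
next
  case (Cons b bs)
  from Cons obtain \<phi> L' where L: "L = \<phi> # L'" by (cases L) auto
  show ?case
  proof (cases b)
    case True
    with Cons obtain x u' where "u = x # u'" by (cases u) auto
    with Cons True L show ?thesis by (auto simp: mult.assoc)
  next
    case False
    with Cons obtain x v' where "v = x # v'" by (cases v) auto
    with Cons False L show ?thesis by (auto simp: algebra_simps)
  qed
qed

lemma sum_list_filter_if: "sum_list (map f (filter P xs)) = sum_list (map (\<lambda>x. if P x then f x else 0) xs)"
  by (induction xs) auto

lemma sum_list_zero: "(\<And>x. x \<in> set xs \<Longrightarrow> f x = 0) \<Longrightarrow> sum_list (map f xs) = (0::'a::monoid_add)"
  by (induction xs) auto

lemma sum_list_swap: "sum_list (map (\<lambda>x. sum_list (map (\<lambda>y. f x y :: 'a::comm_monoid_add) ys)) xs) =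
   sum_list (map (\<lambda>y. sum_list (map (\<lambda>x. f x y) xs)) ys)"
proof (induction xs)
  case (Cons a xs)
  then show ?case by (simp add: sum_list_addf)
qed simp

lemma sum_list_mult_const: "sum_list (map f xs) * (c::'a::comm_ring_1) = sum_list (map (\<lambda>x. f x * c) xs)"
  by (induction xs) (auto simp: algebra_simps)

lemma const_mult_sum_list: "(c::'a::comm_ring_1) * sum_list (map f xs) = sum_list (map (\<lambda>x. c * f x) xs)"
  by (induction xs) (auto simp: algebra_simps)

lemma sel_sum: "sum_list (map (\<lambda>bs. gl L (merge bs u v)) (sel (length u) (length v))) =
  sum_list (map (\<lambda>bs. gl (pick L bs True) u * gl (pick L bs False) v) (List.n_lists (length L) [True, False]))"
proof (cases "length u + length v = length L")
  case True
  show ?thesis unfolding sel_def sum_list_filter_if True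
  proof (rule arg_cong[where f = sum_list], rule map_cong[OF refl])
    fix bs assume "bs \<in> set (List.n_lists (length L) [True, False])"
    then have bs: "length bs = length L" "set bs \<subseteq> {True, False}" by (auto simp: set_n_lists)
    have c: "count_list bs True + count_list bs False = length L" using count_TF[OF bs(2)] bs by simp
    show "(if count_list bs True = length u then gl L (merge bs u v) else 0) =
          gl (pick L bs True) u * gl (pick L bs False) v"
    proof (cases "count_list bs True = length u")
      case T: True
      then have F: "count_list bs False = length v" using c True by simp
      show ?thesis using T F bs length_merge[OF T F] pl_merge[OF T F bs(1)[symmetric]] length_pick[of bs L]
        by (simp add: gl_def)
    next
      case False
      then show ?thesis using length_pick[of bs L] bs by (simp add: gl_def)
    qed
  qed
next
  case False
  have l: "sum_list (map (\<lambda>bs. gl L (merge bs u v)) (sel (length u) (length v))) = 0"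
  proof (rule sum_list_zero)
    fix bs assume "bs \<in> set (sel (length u) (length v))"
    then have bs: "length bs = length u + length v" "set bs \<subseteq> {True, False}" "count_list bs True = length u"
      by (auto simp: sel_def set_n_lists)
    have F: "count_list bs False = length v" using count_TF[OF bs(2)] bs by simp
    show "gl L (merge bs u v) = 0" using length_merge[OF bs(3) F] bs False by (simp add: gl_def)
  qed
  have r: "sum_list (map (\<lambda>bs. gl (pick L bs True) u * gl (pick L bs False) v) (List.n_lists (length L) [True, False])) = 0"
  proof (rule sum_list_zero)
    fix bs assume "bs \<in> set (List.n_lists (length L) [True, False])"
    then have bs: "length bs = length L" "set bs \<subseteq> {True, False}" by (auto simp: set_n_lists)
    have c: "count_list bs True + count_list bs False = length L" using count_TF[OF bs(2)] bs by simp
    show "gl (pick L bs True) u * gl (pick L bs False) v = 0"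
      using c False length_pick[of bs L] bs by (auto simp: gl_def)
  qed
  show ?thesis using l r by simp
qed



lemma EvG_shuf: "EvG G (shuf A B) = sum_list (map (\<lambda>(c, u). sum_list (map (\<lambda>(c', v).
   c * c' * sum_list (map (\<lambda>bs. G (merge bs u v)) (sel (length u) (length v)))) B)) A)"
proof (induction A)
  case Nil then show ?case by (simp add: shuf_def)
next
  case (Cons a A)
  obtain c u where a: "a = (c, u)" by fastforce
  have "shuf (a # A) B = concat (map (\<lambda>(c', v). map (\<lambda>bs. (c * c', merge bs u v)) (sel (length u) (length v))) B) @ shuf A B"
    by (simp add: shuf_def a o_def case_prod_beta')
  moreover have "EvG G (concat (map (\<lambda>(c', v). map (\<lambda>bs. (c * c', merge bs u v)) (sel (length u) (length v))) B))
     = sum_list (map (\<lambda>(c', v). c * c' * sum_list (map (\<lambda>bs. G (merge bs u v)) (sel (length u) (length v)))) B)"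
    by (induction B) (auto simp: EvG_def const_mult_sum_list o_def)
  ultimately show ?case using Cons by (simp add: a)
qed

lemma sum_list_prod2: "sum_list (map (\<lambda>x. sum_list (map (\<lambda>y. f x * g y) ys)) xs) =
   sum_list (map f xs) * (sum_list (map g ys) :: 'a::comm_ring_1)"
  by (induction xs) (auto simp: algebra_simps const_mult_sum_list)

lemma Ev_shuf: "Ev (shuf A B) L = sum_list (map (\<lambda>bs. Ev A (pick L bs True) * Ev B (pick L bs False))
   (List.n_lists (length L) [True, False]))"
proof -
  define N where "N = List.n_lists (length L) [True, False]"
  have "Ev (shuf A B) L = sum_list (map (\<lambda>(c, u). sum_list (map (\<lambda>(c', v).
     c * c' * sum_list (map (\<lambda>bs. gl (pick L bs True) u * gl (pick L bs False) v) N)) B)) A)"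
    by (simp add: Ev_def EvG_shuf sel_sum N_def)
  also have "\<dots> = sum_list (map (\<lambda>(c, u). sum_list (map (\<lambda>(c', v).
     sum_list (map (\<lambda>bs. (c * gl (pick L bs True) u) * (c' * gl (pick L bs False) v)) N)) B)) A)"
    by (simp add: const_mult_sum_list algebra_simps)
  also have "\<dots> = sum_list (map (\<lambda>(c, u).
     sum_list (map (\<lambda>bs. sum_list (map (\<lambda>(c', v). (c * gl (pick L bs True) u) * (c' * gl (pick L bs False) v)) B)) N)) A)"
    by (intro arg_cong[where f=sum_list] map_cong refl) (auto simp: case_prod_beta' intro: sum_list_swap[where f="\<lambda>p bs. h p bs" for h])
  also have "\<dots> = sum_list (map (\<lambda>bs. sum_list (map (\<lambda>(c, u).
     sum_list (map (\<lambda>(c', v). (c * gl (pick L bs True) u) * (c' * gl (pick L bs False) v)) B)) A)) N)"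
    using sum_list_swap[where xs = A and ys = N] by (simp add: case_prod_beta')
  also have "\<dots> = sum_list (map (\<lambda>bs. Ev A (pick L bs True) * Ev B (pick L bs False)) N)"
    by (simp add: Ev_def EvG_def sum_list_prod2 case_prod_beta')
  finally show ?thesis by (simp add: N_def)
qed



lemma sum_list_product: "sum_list (map h (List.product xs ys)) = sum_list (map (\<lambda>x. sum_list (map (\<lambda>y. h (x, y)) ys)) xs)"
  by (induction xs) (auto simp: o_def)

lemma Ev_single: "Ev [(c, u)] L = c * gl L u" by (simp add: Ev_def)

lemma E2_single: "E2 [(c, u, v)] L M = c * gl L u * gl M v" by simp

lemma Ev_shuf1: "Ev (shuf [(1, u)] [(1, u')]) L = sum_list (map (\<lambda>bs. gl (pick L bs True) u * gl (pick L bs False) u')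
   (List.n_lists (length L) [True, False]))"
  by (simp add: Ev_shuf Ev_single)

lemma E2_mult2_pair: "E2 (concat (map (\<lambda>((e1, w1), (e2, w2)). [(c * c' * e1 * e2, w1, w2)])
         (List.product S1 S2))) L M = c * c' * Ev S1 L * Ev S2 M"
proof -
  have "E2 (concat (map (\<lambda>((e1, w1), (e2, w2)). [(c * c' * e1 * e2, w1, w2)]) (List.product S1 S2))) L M
     = (c * c') * sum_list (map (\<lambda>x. sum_list (map (\<lambda>y. (fst x * gl L (snd x)) * (fst y * gl M (snd y))) S2)) S1)"
    by (simp add: E2_def E2_concat o_def sum_list_product case_prod_beta' const_mult_sum_list algebra_simps)
  also have "\<dots> = (c * c') * (sum_list (map (\<lambda>x. fst x * gl L (snd x)) S1) * sum_list (map (\<lambda>y. fst y * gl M (snd y)) S2))"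
    by (simp only: sum_list_prod2)
  finally show ?thesis by (simp add: Ev_def EvG_def case_prod_beta' mult.assoc)
qed

definition M2 :: "('a::comm_ring_1 \<times> 'b list \<times> 'b list) \<Rightarrow> ('a \<times> 'b list \<times> 'b list) \<Rightarrow> ('a, 'b) tens2" where
  "M2 x y = (case x of (c, u, v) \<Rightarrow> case y of (c', u', v') \<Rightarrow> concat (map (\<lambda>((e1, w1), (e2, w2)). [(c * c' * e1 * e2, w1, w2)])
         (List.product (shuf [(1, u)] [(1, u')]) (shuf [(1, v)] [(1, v')]))))"

lemma mult2_M2: "mult2 X Y = concat (map (\<lambda>(x, y). M2 x y) (List.product X Y))"
  unfolding mult2_def M2_def by (intro arg_cong[where f=concat] map_cong refl) auto

lemma E2_mult2: "E2 (mult2 X Y) L M = sum_list (map (\<lambda>bs1. sum_list (map (\<lambda>bs2.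
     E2 X (pick L bs1 True) (pick M bs2 True) * E2 Y (pick L bs1 False) (pick M bs2 False))
     (List.n_lists (length M) [True, False]))) (List.n_lists (length L) [True, False]))"
proof -
  define N1 where "N1 = List.n_lists (length L) [True, False]"
  define N2 where "N2 = List.n_lists (length M) [True, False]"
  define P where "P = (\<lambda>(x::'a \<times> 'b list \<times> 'b list) (y::'a \<times> 'b list \<times> 'b list) bs1 bs2.
      E2 [x] (pick L bs1 True) (pick M bs2 True) * E2 [y] (pick L bs1 False) (pick M bs2 False))"
  have "E2 (mult2 X Y) L M = sum_list (map (\<lambda>x. sum_list (map (\<lambda>y. sum_list (map (\<lambda>bs1. sum_list (map (\<lambda>bs2.
       P x y bs1 bs2) N2)) N1)) Y)) X)"
  proof -
    have pair: "E2 (M2 x y) L M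
       = sum_list (map (\<lambda>bs1. sum_list (map (\<lambda>bs2. P x y bs1 bs2) N2)) N1)" for x y
    proof -
      obtain c u v where x: "x = (c, u, v)" by (cases x) auto
      obtain c' u' v' where y: "y = (c', u', v')" by (cases y) auto
      have "E2 (concat (map (\<lambda>((e1, w1), (e2, w2)). [(c * c' * e1 * e2, w1, w2)])
         (List.product (shuf [(1, u)] [(1, u')]) (shuf [(1, v)] [(1, v')])))) L M
        = c * c' * (sum_list (map (\<lambda>bs. gl (pick L bs True) u * gl (pick L bs False) u') N1)
           * sum_list (map (\<lambda>bs. gl (pick M bs True) v * gl (pick M bs False) v') N2))"
        unfolding E2_mult2_pair Ev_shuf1 N1_def N2_def by (simp add: mult.assoc)
      also have "\<dots> = sum_list (map (\<lambda>bs1. sum_list (map (\<lambda>bs2. P x y bs1 bs2) N2)) N1)"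
        apply (subst sum_list_prod2[symmetric])
        apply (simp add: const_mult_sum_list)
        apply (intro arg_cong[where f=sum_list] map_cong refl)
        apply (simp add: P_def x y algebra_simps)
        done
      finally show ?thesis by (simp add: x y M2_def)
    qed
    show ?thesis
      unfolding mult2_M2 E2_concat map_map o_def sum_list_product by (simp add: pair)
  qed
  also have "\<dots> = sum_list (map (\<lambda>x. sum_list (map (\<lambda>bs1. sum_list (map (\<lambda>y. sum_list (map (\<lambda>bs2.
       P x y bs1 bs2) N2)) Y)) N1)) X)"
    by (rule arg_cong[where f=sum_list], rule map_cong[OF refl], rule sum_list_swap)
  also have "\<dots> = sum_list (map (\<lambda>bs1. sum_list (map (\<lambda>x. sum_list (map (\<lambda>y. sum_list (map (\<lambda>bs2.
       P x y bs1 bs2) N2)) Y)) X)) N1)"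
    by (rule sum_list_swap)
  also have "\<dots> = sum_list (map (\<lambda>bs1. sum_list (map (\<lambda>x. sum_list (map (\<lambda>bs2. sum_list (map (\<lambda>y.
       P x y bs1 bs2) Y)) N2)) X)) N1)"
    by (rule arg_cong[where f=sum_list], rule map_cong[OF refl], rule arg_cong[where f=sum_list], rule map_cong[OF refl], rule sum_list_swap)
  also have "\<dots> = sum_list (map (\<lambda>bs1. sum_list (map (\<lambda>bs2. sum_list (map (\<lambda>x. sum_list (map (\<lambda>y.
       P x y bs1 bs2) Y)) X)) N2)) N1)"
    by (rule arg_cong[where f=sum_list], rule map_cong[OF refl], rule sum_list_swap)
  also have "\<dots> = sum_list (map (\<lambda>bs1. sum_list (map (\<lambda>bs2.
     E2 X (pick L bs1 True) (pick M bs2 True) * E2 Y (pick L bs1 False) (pick M bs2 False)) N2)) N1)"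
  proof -
    have e: "E2 Z A B = sum_list (map (\<lambda>x. E2 [x] A B) Z)" for Z A B
      by (induction Z) auto
    show ?thesis unfolding P_def by (simp add: e[of X] e[of Y] sum_list_prod2)
  qed
  finally show ?thesis by (simp add: N1_def N2_def)
qed



definition mb :: "'b::times list \<Rightarrow> ('b \<Rightarrow> 'k) list \<Rightarrow> ('b \<Rightarrow> 'k) list" where
  "mb z L = map2 (\<lambda>\<phi> y. \<lambda>x. \<phi> (x * y)) L z"

lemma length_mb[simp]: "length (mb z L) = min (length L) (length z)" by (simp add: mb_def)

lemma pl_mb: "length u = length L \<Longrightarrow> length v = length L \<Longrightarrow>
   pl L (map2 (*) u v) = pl (mb v L) (u :: 'b::comm_ring_1 list)"
proof (induction L arbitrary: u v)
  case Nil then show ?case by simp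
next
  case (Cons \<phi> L)
  then obtain x u' y v' where "u = x # u'" "v = y # v'" by (cases u; cases v) auto
  with Cons show ?case by (simp add: mb_def)
qed

lemma gl_star_term: "(if length u = length v then gl L (map2 (*) u v) else 0) =
   (if length v = length L then gl (mb v L) (u :: 'b::comm_ring_1 list) else 0)"
  by (auto simp: gl_def pl_mb)

lemma gl_star_term2: "(a::'k::comm_ring_1) * b * (if length u = length v then gl L (map2 (*) u v) else 0) =
   b * (a * (if length v = length L then gl (mb v L) (u :: 'b::comm_ring_1 list) else 0))"
  unfolding gl_star_term by (simp add: mult_ac)

lemma EvG_star: "Ev (star A (Z :: ('k::comm_ring_1, 'b::comm_ring_1) tens)) L = sum_list (map (\<lambda>(c', z). c' * (if length z = length L then Ev A (mb z L) else 0)) Z)"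
proof -
  have "Ev (star A Z) L = sum_list (map (\<lambda>x. sum_list (map (\<lambda>y. fst x * fst y *
     (if length (snd x) = length (snd y) then gl L (map2 (*) (snd x) (snd y)) else 0)) Z)) A)"
    unfolding star_def Ev_def EvG_concat map_map o_def sum_list_product
    by (intro arg_cong[where f=sum_list] map_cong refl) (auto simp: case_prod_beta' EvG_def)
  also have "\<dots> = sum_list (map (\<lambda>x. sum_list (map (\<lambda>y. fst y * (fst x *
     (if length (snd y) = length L then gl (mb (snd y) L) (snd x) else 0))) Z)) A)"
    by (intro arg_cong[where f=sum_list] map_cong refl) (rule gl_star_term2)
  also have "\<dots> = sum_list (map (\<lambda>y. sum_list (map (\<lambda>x. fst y * (fst x *
     (if length (snd y) = length L then gl (mb (snd y) L) (snd x) else 0))) A)) Z)"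
    by (rule sum_list_swap)
  also have "\<dots> = sum_list (map (\<lambda>(c', z). c' * (if length z = length L then Ev A (mb z L) else 0)) Z)"
    by (intro arg_cong[where f=sum_list] map_cong refl)
       (auto simp: Ev_def EvG_def const_mult_sum_list case_prod_beta' sum_list_zero)
  finally show ?thesis .
qed



lemma E2_pair3: "E2 (concat (map (\<lambda>((c1, w1), (c2, w2)). [(c * c1 * c2, w1, w2)])
         (List.product S1 S2))) L M = c * Ev S1 L * Ev S2 M"
proof -
  have "E2 (concat (map (\<lambda>((c1, w1), (c2, w2)). [(c * c1 * c2, w1, w2)]) (List.product S1 S2))) L M
     = c * sum_list (map (\<lambda>x. sum_list (map (\<lambda>y. (fst x * gl L (snd x)) * (fst y * gl M (snd y))) S2)) S1)"
    by (simp add: E2_def E2_concat o_def sum_list_product case_prod_beta' const_mult_sum_list algebra_simps)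
  also have "\<dots> = c * (sum_list (map (\<lambda>x. fst x * gl L (snd x)) S1) * sum_list (map (\<lambda>y. fst y * gl M (snd y)) S2))"
    by (simp only: sum_list_prod2)
  finally show ?thesis by (simp add: Ev_def EvG_def case_prod_beta' mult.assoc)
qed

lemma Ev_star_single: "Ev (star [(1, u)] (b :: ('k::comm_ring_1, 'b::comm_ring_1) tens)) L =
   sum_list (map (\<lambda>x. fst x * (if length (snd x) = length L then gl (mb (snd x) L) u else 0)) b)"
  unfolding EvG_star Ev_single by (simp add: case_prod_beta' cong: if_cong)

lemma E2_star2: "E2 (star2 Y (b :: ('k::comm_ring_1, 'b::comm_ring_1) tens) f) L1 L2 =
  sum_list (map (\<lambda>x1. sum_list (map (\<lambda>x2. fst x1 * fst x2 *
     (if length (snd x1) = length L1 \<and> length (snd x2) = length L2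
      then E2 Y (mb (snd x1) L1) (mb (snd x2) L2) else 0)) f)) b)"
proof -
  define F1 where "F1 = (\<lambda>(y :: 'k \<times> 'b list \<times> 'b list) x1. fst x1 * (if length (snd x1) = length L1 then gl (mb (snd x1) L1) (fst (snd y)) else 0))"
  define F2 where "F2 = (\<lambda>(y :: 'k \<times> 'b list \<times> 'b list) x2. fst x2 * (if length (snd x2) = length L2 then gl (mb (snd x2) L2) (snd (snd y)) else 0))"
  have "E2 (star2 Y b f) L1 L2 = sum_list (map (\<lambda>y. fst y * sum_list (map (F1 y) b) * sum_list (map (F2 y) f)) Y)"
    unfolding star2_def E2_concat map_map o_def
    by (intro arg_cong[where f=sum_list] map_cong refl) (clarsimp simp: E2_pair3 Ev_star_single F1_def F2_def split_beta)
  also have "\<dots> = sum_list (map (\<lambda>y. sum_list (map (\<lambda>x1. sum_list (map (\<lambda>x2. fst y * F1 y x1 * F2 y x2) f)) b)) Y)"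
    apply (rule arg_cong[where f=sum_list], rule map_cong[OF refl])
    apply (simp only: mult.assoc)
    apply (subst sum_list_prod2[symmetric])
    apply (simp add: const_mult_sum_list mult.assoc)
    done
  also have "\<dots> = sum_list (map (\<lambda>x1. sum_list (map (\<lambda>y. sum_list (map (\<lambda>x2. fst y * F1 y x1 * F2 y x2) f)) Y)) b)"
    by (rule sum_list_swap)
  also have "\<dots> = sum_list (map (\<lambda>x1. sum_list (map (\<lambda>x2. sum_list (map (\<lambda>y. fst y * F1 y x1 * F2 y x2) Y)) f)) b)"
    by (rule arg_cong[where f=sum_list], rule map_cong[OF refl], rule sum_list_swap)
  also have "\<dots> = sum_list (map (\<lambda>x1. sum_list (map (\<lambda>x2. fst x1 * fst x2 *
     (if length (snd x1) = length L1 \<and> length (snd x2) = length L2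
      then E2 Y (mb (snd x1) L1) (mb (snd x2) L2) else 0)) f)) b)"
  proof (rule arg_cong[where f=sum_list], rule map_cong[OF refl], rule arg_cong[where f=sum_list], rule map_cong[OF refl])
    fix x1 x2
    show "sum_list (map (\<lambda>y. fst y * F1 y x1 * F2 y x2) Y) = fst x1 * fst x2 *
     (if length (snd x1) = length L1 \<and> length (snd x2) = length L2
      then E2 Y (mb (snd x1) L1) (mb (snd x2) L2) else 0)"
    proof (cases "length (snd x1) = length L1 \<and> length (snd x2) = length L2")
      case True
      then show ?thesis
        by (simp add: F1_def F2_def E2_def const_mult_sum_list case_prod_beta' algebra_simps)
    next
      case False
      then show ?thesis by (auto simp: F1_def F2_def intro!: sum_list_zero)
    qed
  qed
  finally show ?thesis .
qed

lemma Ev_concat: "Ev (concat ts) L = sum_list (map (\<lambda>t. Ev t L) ts)"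
  by (simp add: Ev_def EvG_concat)

lemma Ev_mu: "Ev (mu X) L = sum_list (map (\<lambda>bs. E2 X (pick L bs True) (pick L bs False))
   (List.n_lists (length L) [True, False]))"
proof -
  define N where "N = List.n_lists (length L) [True, False]"
  have "Ev (mu X) L = sum_list (map (\<lambda>x. sum_list (map (\<lambda>bs. fst x * gl (pick L bs True) (fst (snd x)) * gl (pick L bs False) (snd (snd x))) N)) X)"
    unfolding mu_def Ev_concat map_map o_def
    by (intro arg_cong[where f=sum_list] map_cong refl)
       (auto simp: Ev_shuf Ev_single N_def case_prod_beta' mult.assoc)
  also have "\<dots> = sum_list (map (\<lambda>bs. sum_list (map (\<lambda>x. fst x * gl (pick L bs True) (fst (snd x)) * gl (pick L bs False) (snd (snd x))) X)) N)"
    by (rule sum_list_swap)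
  also have "\<dots> = sum_list (map (\<lambda>bs. E2 X (pick L bs True) (pick L bs False)) N)"
    by (simp add: E2_def case_prod_beta')
  finally show ?thesis by (simp add: N_def)
qed



definition Lin :: "('k::field \<Rightarrow> 'b::comm_ring_1 \<Rightarrow> 'b) \<Rightarrow> (nat \<Rightarrow> 'b set) \<Rightarrow> nat \<Rightarrow> ('b \<Rightarrow> 'k) list \<Rightarrow> bool" where
  "Lin smul Bd d L \<longleftrightarrow> (\<forall>\<phi>\<in>set L. lin_fun smul Bd d \<phi>)"

definition symE :: "('k::field \<Rightarrow> 'b::comm_ring_1 \<Rightarrow> 'b) \<Rightarrow> (nat \<Rightarrow> 'b set) \<Rightarrow> nat \<Rightarrow> ('k, 'b) tens \<Rightarrow> bool" where
  "symE smul Bd d t \<longleftrightarrow> (\<forall>L L'. Lin smul Bd d L \<longrightarrow> mset L = mset L' \<longrightarrow> Ev t L = Ev t L')"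

lemma pl_prod: "length L = length w \<Longrightarrow> pl L w = (\<Prod>i<length w. (L ! i) (w ! i))"
proof (induction w arbitrary: L)
  case Nil then show ?case by simp
next
  case (Cons x w)
  then obtain \<phi> L' where "L = \<phi> # L'" by (cases L) auto
  with Cons show ?case by (simp add: prod.lessThan_Suc_shift del: prod.lessThan_Suc)
qed

lemma pl_append: "length L1 = length u \<Longrightarrow> pl (L1 @ L2) (u @ v) = pl L1 u * pl L2 v"
  by (induction L1 u rule: list_induct2) auto

lemma Ev_len: "tens_in Bd d n t \<Longrightarrow> length L \<noteq> n \<Longrightarrow> Ev t L = 0"
  unfolding Ev_def EvG_def tens_in_def
  by (rule sum_list_zero) (auto simp: gl_def)

lemma tens_eval_Ev: "tens_in Bd d n t \<Longrightarrow> tens_eval \<phi>s t = Ev t (map \<phi>s [0..<n])"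
  unfolding tens_eval_def Ev_def EvG_def tens_in_def
  by (intro arg_cong[where f=sum_list] map_cong refl) (auto simp: gl_def pl_prod)

lemma teq_iff: "teq smul Bd d n t t' \<longleftrightarrow> tens_in Bd d n t \<and> tens_in Bd d n t' \<and>
   (\<forall>L. Lin smul Bd d L \<longrightarrow> length L = n \<longrightarrow> Ev t L = Ev t' L)"
proof
  assume h: "teq smul Bd d n t t'"
  then have ti: "tens_in Bd d n t" "tens_in Bd d n t'" by (auto simp: teq_def)
  moreover have "Ev t L = Ev t' L" if "Lin smul Bd d L" "length L = n" for L
  proof -
    have "\<forall>i<n. lin_fun smul Bd d ((!) L i)" using that by (auto simp: Lin_def)
    then have "tens_eval ((!) L) t = tens_eval ((!) L) t'" using h by (auto simp: teq_def)
    moreover have "map ((!) L) [0..<n] = L" using that(2) map_nth by blast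
    ultimately show ?thesis using ti that by (simp add: tens_eval_Ev)
  qed
  ultimately show "tens_in Bd d n t \<and> tens_in Bd d n t' \<and>
   (\<forall>L. Lin smul Bd d L \<longrightarrow> length L = n \<longrightarrow> Ev t L = Ev t' L)" by blast
next
  assume h: "tens_in Bd d n t \<and> tens_in Bd d n t' \<and>
   (\<forall>L. Lin smul Bd d L \<longrightarrow> length L = n \<longrightarrow> Ev t L = Ev t' L)"
  show "teq smul Bd d n t t'" unfolding teq_def
  proof (intro conjI allI impI)
    fix \<phi>s assume "\<forall>i<n. lin_fun smul Bd d (\<phi>s i)"
    then have "Lin smul Bd d (map \<phi>s [0..<n])" by (auto simp: Lin_def)
    then have "Ev t (map \<phi>s [0..<n]) = Ev t' (map \<phi>s [0..<n])" using h by simp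
    then show "tens_eval \<phi>s t = tens_eval \<phi>s t'" using h tens_eval_Ev by metis
  qed (use h in blast)+
qed

lemma tens2_eval_E2: "tens2_eval p q \<phi>s X = E2 X (map \<phi>s [0..<p]) (map \<phi>s [p..<p+q])"
proof -
  have "(if length u = p \<and> length v = q then c * (\<Prod>i<p + q. \<phi>s i ((u @ v) ! i)) else 0) =
        c * gl (map \<phi>s [0..<p]) u * gl (map \<phi>s [p..<p+q]) v" for c u v
  proof (cases "length u = p \<and> length v = q")
    case True
    have m: "map \<phi>s [0..<p+q] = map \<phi>s [0..<p] @ map \<phi>s [p..<p+q]" using upt_add_eq_append[of 0 p q] by simp
    have "pl (map \<phi>s [0..<p+q]) (u @ v) = (\<Prod>i<p + q. \<phi>s i ((u @ v) ! i))"
      using True by (subst pl_prod) auto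
    then have "pl (map \<phi>s [0..<p] @ map \<phi>s [p..<p+q]) (u @ v) = (\<Prod>i<p + q. \<phi>s i ((u @ v) ! i))"
      by (simp only: m)
    then show ?thesis using True by (auto simp: gl_def pl_append)
  next
    case False then show ?thesis by (auto simp: gl_def)
  qed
  then show ?thesis unfolding tens2_eval_def E2_def by (simp add: case_prod_beta')
qed

lemma teq2_iff: "teq2 smul Bd d X Y \<longleftrightarrow> tens2_in Bd d X \<and> tens2_in Bd d Y \<and>
   (\<forall>L M. Lin smul Bd d L \<longrightarrow> Lin smul Bd d M \<longrightarrow> E2 X L M = E2 Y L M)"
proof
  assume h: "teq2 smul Bd d X Y"
  then have ti: "tens2_in Bd d X" "tens2_in Bd d Y" unfolding teq2_def by blast+
  have "E2 X L M = E2 Y L M" if "Lin smul Bd d L" "Lin smul Bd d M" for L M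
  proof -
    define \<phi>s where "\<phi>s = (!) (L @ M)"
    have "\<forall>i<length L + length M. lin_fun smul Bd d (\<phi>s i)" using that
      unfolding Lin_def \<phi>s_def by (metis Un_iff length_append nth_mem set_append)
    then have "tens2_eval (length L) (length M) \<phi>s X = tens2_eval (length L) (length M) \<phi>s Y"
      using h unfolding teq2_def by blast
    moreover have "map \<phi>s [0..<length L] = L" unfolding list_eq_iff_nth_eq by (simp add: \<phi>s_def nth_append)
    moreover have "map \<phi>s [length L..<length L + length M] = M" unfolding list_eq_iff_nth_eq by (simp add: \<phi>s_def nth_append)
    ultimately show ?thesis by (simp add: tens2_eval_E2)
  qed
  then show "tens2_in Bd d X \<and> tens2_in Bd d Y \<and>
   (\<forall>L M. Lin smul Bd d L \<longrightarrow> Lin smul Bd d M \<longrightarrow> E2 X L M = E2 Y L M)" using ti by blast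
next
  assume h: "tens2_in Bd d X \<and> tens2_in Bd d Y \<and>
   (\<forall>L M. Lin smul Bd d L \<longrightarrow> Lin smul Bd d M \<longrightarrow> E2 X L M = E2 Y L M)"
  show "teq2 smul Bd d X Y" unfolding teq2_def
  proof (intro conjI allI impI)
    fix p q :: nat and \<phi>s assume "\<forall>i<p + q. lin_fun smul Bd d (\<phi>s i)"
    then have "Lin smul Bd d (map \<phi>s [0..<p])" "Lin smul Bd d (map \<phi>s [p..<p+q])" by (auto simp: Lin_def)
    then show "tens2_eval p q \<phi>s X = tens2_eval p q \<phi>s Y" using h by (simp add: tens2_eval_E2)
  qed (use h in blast)+
qed

lemma gl_perm:
  assumes "\<sigma> permutes {..<n}" "length w = n" "length L = n"
  shows "gl L (map (\<lambda>i. w ! \<sigma> i) [0..<length w]) = gl (permute_list (inv \<sigma>) L) w"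
proof -
  have ip: "inv \<sigma> permutes {..<n}" using assms(1) by (rule permutes_inv)
  have "(\<Prod>i<n. (L ! i) (map (\<lambda>i. w ! \<sigma> i) [0..<n] ! i)) = (\<Prod>i<n. (L ! i) (w ! \<sigma> i))"
    by (rule prod.cong) auto
  also have "\<dots> = (\<Prod>j<n. (L ! inv \<sigma> j) (w ! \<sigma> (inv \<sigma> j)))"
    using prod.permute[OF ip, of "\<lambda>i. (L ! i) (w ! \<sigma> i)"] by (simp add: o_def)
  also have "\<dots> = (\<Prod>j<n. (permute_list (inv \<sigma>) L ! j) (w ! j))"
    by (rule prod.cong) (auto simp: permutes_inverses(1)[OF assms(1)] permute_list_nth[OF ip[folded assms(3)]] assms(3))
  finally have *: "(\<Prod>i<n. (L ! i) (map (\<lambda>i. w ! \<sigma> i) [0..<n] ! i)) = (\<Prod>j<n. (permute_list (inv \<sigma>) L ! j) (w ! j))" .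
  have l1: "length (map (\<lambda>i. w ! \<sigma> i) [0..<length w]) = n" using assms by simp
  have l2: "length (permute_list (inv \<sigma>) L) = n" using assms by simp
  show ?thesis unfolding gl_def using l1 l2 assms(2,3) pl_prod[of L "map (\<lambda>i. w ! \<sigma> i) [0..<length w]"]
    pl_prod[of "permute_list (inv \<sigma>) L" w] * by simp
qed

lemma Ev_perm_t:
  assumes "\<sigma> permutes {..<n}" "\<forall>(c, w)\<in>set t. length w = n" "length L = n"
  shows "Ev (perm_t \<sigma> t) L = Ev t (permute_list (inv \<sigma>) L)"
  unfolding perm_t_def Ev_def EvG_def map_map o_def
proof (intro arg_cong[where f=sum_list] map_cong refl)
  fix x assume "x \<in> set t"
  then obtain c w where x: "x = (c, w)" and lw: "length w = n" using assms(2) by fastforce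
  show "(case (case x of (c, w) \<Rightarrow> (c, map (\<lambda>i. w ! \<sigma> i) [0..<length w])) of (c, w) \<Rightarrow> c * gl L w) =
      (case x of (c, w) \<Rightarrow> c * gl (permute_list (inv \<sigma>) L) w)"
    using gl_perm[OF assms(1) lw assms(3)] by (simp add: x)
qed

lemma tens_in_len: "tens_in Bd d n t \<Longrightarrow> \<forall>(c, w)\<in>set t. length w = n"
  by (auto simp: tens_in_def)

lemma Sym_iff: "t \<in> Sym smul Bd d n \<longleftrightarrow> tens_in Bd d n t \<and> symE smul Bd d t"
proof
  assume h: "t \<in> Sym smul Bd d n"
  then have ti: "tens_in Bd d n t" by (simp add: Sym_def)
  have "Ev t L = Ev t L'" if L: "Lin smul Bd d L" "mset L = mset L'" for L L'
  proof (cases "length L = n")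
    case False
    moreover have "length L' = length L" using L(2) mset_eq_length by metis
    ultimately show ?thesis using Ev_len[OF ti] by metis
  next
    case True
    have lL': "length L' = n" using L(2) mset_eq_length True by metis
    obtain p where p: "p permutes {..<length L'}" "permute_list p L' = L"
      using mset_eq_permutation[OF L(2)] by blast
    have pn: "p permutes {..<n}" using p(1) lL' by simp
    have ip: "inv p permutes {..<n}" using pn by (rule permutes_inv)
    have "teq smul Bd d n (perm_t (inv p) t) t" using h ip by (simp add: Sym_def)
    moreover have "Lin smul Bd d L'" using L by (auto simp: Lin_def dest: mset_eq_setD)
    ultimately have "Ev (perm_t (inv p) t) L' = Ev t L'" using lL' by (simp add: teq_iff)
    moreover have "Ev (perm_t (inv p) t) L' = Ev t (permute_list (inv (inv p)) L')"
      by (rule Ev_perm_t[OF ip tens_in_len[OF ti] lL'])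
    moreover have "inv (inv p) = p" using pn by (simp add: inv_inv_eq permutes_bij)
    ultimately show ?thesis using p(2) by simp
  qed
  then show "tens_in Bd d n t \<and> symE smul Bd d t" using ti by (auto simp: symE_def)
next
  assume h: "tens_in Bd d n t \<and> symE smul Bd d t"
  show "t \<in> Sym smul Bd d n" unfolding Sym_def
  proof (intro CollectI conjI allI impI)
    fix \<sigma> :: "nat \<Rightarrow> nat" assume s: "\<sigma> permutes {..<n}"
    have ti: "tens_in Bd d n (perm_t \<sigma> t)"
      using h permutes_in_image[OF s] unfolding tens_in_def perm_t_def
      by (fastforce simp: subset_iff)
    show "teq smul Bd d n (perm_t \<sigma> t) t" unfolding teq_iff
    proof (intro conjI allI impI ti)
      fix L assume L: "Lin smul Bd d L" "length L = n"
      have "Ev (perm_t \<sigma> t) L = Ev t (permute_list (inv \<sigma>) L)"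
        using Ev_perm_t[OF s tens_in_len[of Bd d n t] L(2)] h by blast
      also have "\<dots> = Ev t L"
        using h L permutes_inv[OF s] unfolding symE_def
        by (metis mset_permute_list)
      finally show "Ev (perm_t \<sigma> t) L = Ev t L" .
    qed (use h in simp)
  qed (use h in simp)
qed



definition bsj :: "nat \<Rightarrow> nat \<Rightarrow> bool list" where
  "bsj k j = replicate j False @ True # replicate (k - 1 - j) False"

definition del :: "nat \<Rightarrow> 'a list \<Rightarrow> 'a list" where
  "del j L = take j L @ drop (Suc j) L"

lemma sum_n_lists_Suc: "sum_list (map g (List.n_lists (Suc k) [True, False])) =
   sum_list (map (\<lambda>ys. g (True # ys) + g (False # ys)) (List.n_lists k [True, False]))"
proof -
  have c: "sum_list (map g (concat xss)) = sum_list (map (\<lambda>xs. sum_list (map g xs)) xss)" for xss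
    by (induction xss) auto
  show ?thesis by (simp add: c o_def add.commute)
qed

lemma K0: "sum_list (map (\<lambda>bs. if count_list bs True = 0 then f bs else 0) (List.n_lists k [True, False]))
   = (f (replicate k False) :: 'a::comm_monoid_add)"
proof (induction k arbitrary: f)
  case 0 then show ?case by simp
next
  case (Suc k)
  show ?case unfolding sum_n_lists_Suc
    using Suc[of "\<lambda>ys. f (False # ys)"] by simp
qed

lemma K1: "sum_list (map (\<lambda>bs. if count_list bs True = 1 then h bs else 0) (List.n_lists k [True, False]))
   = (\<Sum>j<k. h (bsj k j) :: 'a::comm_monoid_add)"
proof (induction k arbitrary: h)
  case 0 then show ?case by simp
next
  case (Suc k)
  have "sum_list (map (\<lambda>bs. if count_list bs True = 1 then h bs else 0) (List.n_lists (Suc k) [True, False]))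
     = sum_list (map (\<lambda>ys. (if count_list ys True = 0 then h (True # ys) else 0)
          + (if count_list ys True = 1 then h (False # ys) else 0)) (List.n_lists k [True, False]))"
    unfolding sum_n_lists_Suc by simp
  also have "\<dots> = h (True # replicate k False) + (\<Sum>j<k. h (False # bsj k j))"
    unfolding sum_list_addf K0[of "\<lambda>ys. h (True # ys)"] Suc[of "\<lambda>ys. h (False # ys)"] by simp
  also have "\<dots> = (\<Sum>j<Suc k. h (bsj (Suc k) j))"
    by (simp add: sum.lessThan_Suc_shift bsj_def del: sum.lessThan_Suc)
  finally show ?case .
qed

lemma pick_repF: "j \<le> length L \<Longrightarrow> pick L (replicate j False @ bs) True = pick (drop j L) bs True"
proof (induction L arbitrary: j)
  case (Cons y L) then show ?case by (cases j) auto
qed simp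

lemma pick_repF': "j \<le> length L \<Longrightarrow> pick L (replicate j False @ bs) False = take j L @ pick (drop j L) bs False"
proof (induction L arbitrary: j)
  case (Cons y L) then show ?case by (cases j) auto
qed simp

lemma pick_allF: "pick L (replicate m False) True = []"
proof (induction L arbitrary: m)
  case (Cons y L) then show ?case by (cases m) auto
qed simp

lemma pick_allF': "length L = m \<Longrightarrow> pick L (replicate m False) False = L"
proof (induction L arbitrary: m)
  case (Cons y L) then show ?case by (cases m) auto
qed simp

lemma pick_bsj: "j < length L \<Longrightarrow> pick L (bsj (length L) j) True = [L ! j]"
  unfolding bsj_def using pick_repF[of j L]
  by (auto simp: Cons_nth_drop_Suc[symmetric] pick_allF)

lemma pick_bsj': "j < length L \<Longrightarrow> pick L (bsj (length L) j) False = del j L"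
  unfolding bsj_def del_def using pick_repF'[of j L]
  by (auto simp: Cons_nth_drop_Suc[symmetric] pick_allF')

lemma mset_del: "j < length L \<Longrightarrow> mset (del j L) = mset L - {#L ! j#}"
proof -
  assume j: "j < length L"
  have "mset L = mset (take j L @ L ! j # drop (Suc j) L)" using id_take_nth_drop[OF j] by metis
  then show ?thesis by (simp add: del_def)
qed

lemma mset_del': "j < length L \<Longrightarrow> mset (L ! j # del j L) = mset L"
  using mset_del[of j L] by (simp add: insert_DiffM)

lemma set_del: "set (del j L) \<subseteq> set L"
  unfolding del_def by (auto dest: in_set_takeD in_set_dropD)

lemma length_del: "j < length L \<Longrightarrow> length (del j L) = length L - 1"
  by (simp add: del_def)

lemma Ev_x: "Ev [(1, [x])] A = (if length A = 1 then hd A x else 0)"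
proof (cases A)
  case (Cons a A') then show ?thesis by (cases A') (auto simp: Ev_def gl_def pl_def)
qed (auto simp: Ev_def gl_def)

lemma Ev_shuf_x: "Ev (shuf [(1, [x])] B) L = (\<Sum>j<length L. (L ! j) x * Ev B (del j L))"
proof -
  have "Ev (shuf [(1, [x])] B) L = sum_list (map (\<lambda>bs. if count_list bs True = 1 then
      (if length (pick L bs True) = 1 then hd (pick L bs True) x else 0) * Ev B (pick L bs False) else 0)
      (List.n_lists (length L) [True, False]))"
    unfolding Ev_shuf Ev_x
    by (intro arg_cong[where f=sum_list] map_cong refl) (auto simp: length_pick set_n_lists)
  also have "\<dots> = (\<Sum>j<length L. (if length (pick L (bsj (length L) j) True) = 1 then hd (pick L (bsj (length L) j) True) x else 0)
      * Ev B (pick L (bsj (length L) j) False))"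
    by (rule K1)
  also have "\<dots> = (\<Sum>j<length L. (L ! j) x * Ev B (del j L))"
    by (rule sum.cong) (auto simp: pick_bsj pick_bsj')
  finally show ?thesis .
qed



fun S :: "'b list \<Rightarrow> ('k::comm_ring_1, 'b) tens" where
  "S [] = [(1, [])]"
| "S (x # w) = shuf [(1, [x])] (S w)"

lemma shuf_words: "(c, z) \<in> set (shuf A B) \<Longrightarrow> \<exists>c1 u c2 v. (c1, u) \<in> set A \<and> (c2, v) \<in> set B \<and>
   length z = length u + length v \<and> set z \<subseteq> set u \<union> set v"
proof -
  assume "(c, z) \<in> set (shuf A B)"
  then obtain c1 u c2 v bs where h: "(c1, u) \<in> set A" "(c2, v) \<in> set B" "bs \<in> set (sel (length u) (length v))"
    "z = merge bs u v"
    unfolding shuf_def by auto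
  from h(3) have bs: "length bs = length u + length v" "set bs \<subseteq> {True, False}" "count_list bs True = length u"
    by (auto simp: sel_def set_n_lists)
  have F: "count_list bs False = length v" using count_TF[OF bs(2)] bs(1,3) by simp
  have "length z = length u + length v" using length_merge[OF bs(3) F] h(4) bs(1) by simp
  moreover have "set z \<subseteq> set u \<union> set v" using set_merge[of bs u v] h(4) by simp
  ultimately show ?thesis using h(1,2) by blast
qed

lemma S_words:
  fixes c :: "'k::comm_ring_1" and z w :: "'b list"
  shows "(c, z) \<in> set (S w) \<Longrightarrow> length z = length w \<and> set z \<subseteq> set w"
proof (induction w arbitrary: c z)
  case Nil then show ?case by simp
next
  case (Cons x w)
  have mem: "(c, z) \<in> set (shuf [(1, [x])] (S w))" using Cons.prems by simp
  obtain c1 u c2 v where h: "(c1, u) \<in> set [(1::'k, [x])]" "(c2, v) \<in> set (S w :: ('k, 'b) tens)"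
    "length z = length u + length v" "set z \<subseteq> set u \<union> set v"
    using shuf_words[OF mem] by (elim exE conjE) (rule that; assumption)
  have "length v = length w \<and> set v \<subseteq> set w" using Cons.IH[OF h(2)] .
  then show ?case using h by auto
qed

lemma sum_list_nth_lessThan: "sum_list (map f L) = (\<Sum>j<length L. f (L ! j))"
  by (simp add: sum_list_sum_nth atLeast0LessThan)

lemma sum_list_mset: "sum_list (map f xs) = sum_mset (image_mset f (mset xs) :: 'a::comm_monoid_add multiset)"
  by (induction xs) auto

lemma sum_list_mset_eq: "mset xs = mset ys \<Longrightarrow> sum_list (map f xs) = (sum_list (map f ys) :: 'a::comm_monoid_add)"
  by (simp only: sum_list_mset)

lemma symE_S: "symE smul Bd d (S w)"
proof (induction w)
  case Nil
  show ?case unfolding symE_def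
  proof (intro allI impI)
    fix L L' :: "('b \<Rightarrow> 'a) list" assume "Lin smul Bd d L" "mset L = mset L'"
    then have "length L = length L'" using mset_eq_length by metis
    then show "Ev (S []) L = Ev (S []) L'" by (simp add: Ev_def gl_def)
  qed
next
  case (Cons x w)
  have key: "Ev (S (x # w)) L = sum_list (map (\<lambda>y. y x * Ev (S w) (remove1 y L)) L)"
    if "Lin smul Bd d L" for L
  proof -
    have "Ev (S (x # w)) L = (\<Sum>j<length L. (L ! j) x * Ev (S w) (del j L))"
      by (simp add: Ev_shuf_x)
    also have "\<dots> = (\<Sum>j<length L. (L ! j) x * Ev (S w) (remove1 (L ! j) L))"
    proof (rule sum.cong[OF refl])
      fix j assume "j \<in> {..<length L}"
      then have j: "j < length L" by simp
      have "Lin smul Bd d (del j L)" using that set_del[of j L] by (auto simp: Lin_def)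
      moreover have "mset (del j L) = mset (remove1 (L ! j) L)" using mset_del[OF j] by simp
      ultimately show "(L ! j) x * Ev (S w) (del j L) = (L ! j) x * Ev (S w) (remove1 (L ! j) L)"
        using Cons.IH unfolding symE_def by metis
    qed
    also have "\<dots> = sum_list (map (\<lambda>y. y x * Ev (S w) (remove1 y L)) L)"
      by (simp add: sum_list_nth_lessThan)
    finally show ?thesis .
  qed
  show ?case unfolding symE_def
  proof (intro allI impI)
    fix L L' :: "('b \<Rightarrow> 'a) list" assume L: "Lin smul Bd d L" "mset L = mset L'"
    have L': "Lin smul Bd d L'" using L by (auto simp: Lin_def dest: mset_eq_setD)
    have "Ev (S (x # w)) L = sum_list (map (\<lambda>y. y x * Ev (S w) (remove1 y L)) L)" by (rule key[OF L(1)])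
    also have "\<dots> = sum_list (map (\<lambda>y. y x * Ev (S w) (remove1 y L')) L)"
    proof (rule arg_cong[where f=sum_list], rule map_cong[OF refl])
      fix y assume "y \<in> set L"
      have "Lin smul Bd d (remove1 y L)" using L(1) set_remove1_subset[of y L] by (auto simp: Lin_def)
      moreover have "mset (remove1 y L) = mset (remove1 y L')" using L(2) by simp
      ultimately show "y x * Ev (S w) (remove1 y L) = y x * Ev (S w) (remove1 y L')"
        using Cons.IH unfolding symE_def by metis
    qed
    also have "\<dots> = sum_list (map (\<lambda>y. y x * Ev (S w) (remove1 y L')) L')"
      by (rule sum_list_mset_eq[OF L(2)])
    also have "\<dots> = Ev (S (x # w)) L'" by (rule key[OF L', symmetric])
    finally show "Ev (S (x # w)) L = Ev (S (x # w)) L'" .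
  qed
qed



definition contr :: "('b \<Rightarrow> 'k::comm_ring_1) \<Rightarrow> ('k, 'b) tens \<Rightarrow> ('k, 'b) tens" where
  "contr \<phi> a = map (\<lambda>(c, w). (c * \<phi> (hd w), tl w)) a"

definition Phi :: "('k::comm_ring_1, 'b) tens \<Rightarrow> ('b \<Rightarrow> 'k) list \<Rightarrow> 'k" where
  "Phi a L = sum_list (map (\<lambda>(c, w). c * Ev (S w) L) a)"

lemma Ev_len0: "\<forall>(c, w)\<in>set a. length w = N \<Longrightarrow> length L \<noteq> N \<Longrightarrow> Ev a L = 0"
  unfolding Ev_def EvG_def by (rule sum_list_zero) (auto simp: gl_def)

lemma Ev_contr: "\<forall>(c, w)\<in>set a. length w = Suc N \<Longrightarrow> Ev (contr \<phi> a) M = Ev a (\<phi> # M)"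
  unfolding Ev_def EvG_def contr_def map_map o_def
proof (intro arg_cong[where f=sum_list] map_cong refl)
  fix x assume "\<forall>(c, w)\<in>set a. length w = Suc N" "x \<in> set a"
  then obtain c y w where x: "x = (c, y # w)" by (cases x) (auto simp: length_Suc_conv)
  show "(case case x of (c, w) \<Rightarrow> (c * \<phi> (hd w), tl w) of (c, w) \<Rightarrow> c * gl M w) =
         (case x of (c, w) \<Rightarrow> c * gl (\<phi> # M) w)"
    by (simp add: x gl_def)
qed

lemma symE_contr: "lin_fun smul Bd d \<phi> \<Longrightarrow> \<forall>(c, w)\<in>set a. length w = Suc N \<Longrightarrow> symE smul Bd d a \<Longrightarrow>
   symE smul Bd d (contr \<phi> a)"
  unfolding symE_def
proof (intro allI impI)
  fix L L' assume h: "lin_fun smul Bd d \<phi>" "\<forall>(c, w)\<in>set a. length w = Suc N"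
    "\<forall>L L'. Lin smul Bd d L \<longrightarrow> mset L = mset L' \<longrightarrow> Ev a L = Ev a L'" "Lin smul Bd d L" "mset L = mset L'"
  have "Lin smul Bd d (\<phi> # L)" using h by (simp add: Lin_def)
  moreover have "mset (\<phi> # L) = mset (\<phi> # L')" using h by simp
  ultimately have "Ev a (\<phi> # L) = Ev a (\<phi> # L')" using h(3) by blast
  then show "Ev (contr \<phi> a) L = Ev (contr \<phi> a) L'" using Ev_contr[OF h(2)] by simp
qed

lemma sum_list_sum_swap: "sum_list (map (\<lambda>x. \<Sum>j\<in>A. f x j) xs) = (\<Sum>j\<in>A. sum_list (map (\<lambda>x. f x j) xs))"
  by (induction xs) (auto simp: sum.distrib)

lemma Phi_Cons:
  assumes "\<forall>(c, w)\<in>set a. length w = Suc N"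
  shows "Phi a L = (\<Sum>j<length L. Phi (contr (L ! j) a) (del j L))"
proof -
  have "Phi a L = sum_list (map (\<lambda>x. \<Sum>j<length L. (fst x * (L ! j) (hd (snd x))) * Ev (S (tl (snd x))) (del j L)) a)"
    unfolding Phi_def
  proof (intro arg_cong[where f=sum_list] map_cong refl)
    fix x assume "x \<in> set a"
    then obtain c y w where x: "x = (c, y # w)" using assms by (cases x) (auto simp: length_Suc_conv)
    show "(case x of (c, w) \<Rightarrow> c * Ev (S w) L) =
        (\<Sum>j<length L. fst x * (L ! j) (hd (snd x)) * Ev (S (tl (snd x))) (del j L))"
      by (simp add: x Ev_shuf_x sum_distrib_left mult.assoc)
  qed
  also have "\<dots> = (\<Sum>j<length L. sum_list (map (\<lambda>x. (fst x * (L ! j) (hd (snd x))) * Ev (S (tl (snd x))) (del j L)) a))"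
    by (rule sum_list_sum_swap)
  also have "\<dots> = (\<Sum>j<length L. Phi (contr (L ! j) a) (del j L))"
    by (simp add: Phi_def contr_def o_def case_prod_beta')
  finally show ?thesis .
qed

lemma Phi_fact:
  "\<forall>(c, w)\<in>set a. length w = N \<Longrightarrow> symE smul Bd d a \<Longrightarrow> Lin smul Bd d L \<Longrightarrow>
   Phi a L = fact N * Ev a L"
proof (induction N arbitrary: a L)
  case 0
  then have "\<forall>(c, w)\<in>set a. w = []" by auto
  then show ?case unfolding Phi_def Ev_def EvG_def
    by (auto intro!: arg_cong[where f=sum_list] map_cong simp: Ev_def gl_def)
next
  case (Suc N)
  have "Phi a L = (\<Sum>j<length L. Phi (contr (L ! j) a) (del j L))"
    by (rule Phi_Cons[OF Suc.prems(1)])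
  also have "\<dots> = (\<Sum>j<length L. fact N * Ev a L)"
  proof (rule sum.cong[OF refl])
    fix j assume "j \<in> {..<length L}"
    then have j: "j < length L" by simp
    have lin: "lin_fun smul Bd d (L ! j)" using Suc.prems(3) j by (auto simp: Lin_def)
    have len: "\<forall>(c, w)\<in>set (contr (L ! j) a). length w = N" using Suc.prems(1) by (auto simp: contr_def)
    have "Phi (contr (L ! j) a) (del j L) = fact N * Ev (contr (L ! j) a) (del j L)"
      using Suc.IH[OF len symE_contr[OF lin Suc.prems(1,2)]] Suc.prems(3) set_del[of j L]
      by (auto simp: Lin_def)
    also have "\<dots> = fact N * Ev a (L ! j # del j L)" using Ev_contr[OF Suc.prems(1)] by simp
    also have "\<dots> = fact N * Ev a L"
      using Suc.prems(2,3) mset_del'[OF j] unfolding symE_def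
      by (metis Lin_def lin set_ConsD set_del subsetD)
    finally show "Phi (contr (L ! j) a) (del j L) = fact N * Ev a L" .
  qed
  also have "\<dots> = fact (Suc N) * Ev a L"
  proof (cases "length L = Suc N")
    case True then show ?thesis by (simp add: algebra_simps)
  next
    case False then show ?thesis using Ev_len0[OF Suc.prems(1) False] by simp
  qed
  finally show ?case .
qed



lemma Ev_scale: "Ev (scale_t s t) L = s * Ev t L"
  by (induction t) (auto simp: scale_t_def Ev_def EvG_def algebra_simps)

lemma E2_scale: "E2 (scale_t2 s X) L M = s * E2 X L M"
  by (induction X) (auto simp: scale_t2_def algebra_simps)

lemma Lin_append: "Lin smul Bd d (L @ M) \<longleftrightarrow> Lin smul Bd d L \<and> Lin smul Bd d M"
  by (auto simp: Lin_def)

lemma Lin_pick: "Lin smul Bd d L \<Longrightarrow> Lin smul Bd d (pick L bs t)"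
  using set_pick[of L bs t] by (auto simp: Lin_def)

lemma n_lists_split: "sum_list (map g (List.n_lists (p + q) [True, False])) = (
  sum_list (map (\<lambda>bs1. sum_list (map (\<lambda>bs2. g (bs1 @ bs2)) (List.n_lists q [True, False]))) (List.n_lists p [True, False])) :: 'a::comm_monoid_add)"
proof (induction p arbitrary: g)
  case 0 then show ?case by simp
next
  case (Suc p)
  have "sum_list (map g (List.n_lists (Suc p + q) [True, False])) =
     sum_list (map (\<lambda>ys. g (True # ys) + g (False # ys)) (List.n_lists (p + q) [True, False]))"
    using sum_n_lists_Suc[of g "p + q"] by simp
  also have "\<dots> = sum_list (map (\<lambda>bs1. sum_list (map (\<lambda>bs2. g (True # bs1 @ bs2) + g (False # bs1 @ bs2))
      (List.n_lists q [True, False]))) (List.n_lists p [True, False]))"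
    by (rule Suc.IH)
  also have "\<dots> = sum_list (map (\<lambda>bs1. sum_list (map (\<lambda>bs2. g (bs1 @ bs2)) (List.n_lists q [True, False])))
      (List.n_lists (Suc p) [True, False]))"
    unfolding sum_n_lists_Suc by (simp add: sum_list_addf)
  finally show ?case .
qed

lemma pick_append: "length bs1 = length L1 \<Longrightarrow> pick (L1 @ L2) (bs1 @ bs2) t = pick L1 bs1 t @ pick L2 bs2 t"
proof (induction L1 arbitrary: bs1)
  case (Cons a L1) then show ?case by (cases bs1) auto
qed simp

lemma E2_Delta_x: "E2 [(1, [], [x]), (1, [x], [])] A B = Ev [(1, [x])] (A @ B)"
  unfolding Ev_x
  by (cases A; cases B) (auto simp: gl_def pl_def)

lemma Ev_S_Cons_split: "Ev (S (x # w)) (L1 @ L2) = sum_list (map (\<lambda>bs1. sum_list (map (\<lambda>bs2.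
    Ev [(1, [x])] (pick L1 bs1 True @ pick L2 bs2 True) * Ev (S w) (pick L1 bs1 False @ pick L2 bs2 False))
    (List.n_lists (length L2) [True, False]))) (List.n_lists (length L1) [True, False]))"
  unfolding S.simps Ev_shuf length_append n_lists_split
  by (intro arg_cong[where f=sum_list] map_cong refl) (auto simp: pick_append set_n_lists)

lemma Sym_tens_in: "t \<in> Sym smul Bd d n \<Longrightarrow> tens_in Bd d n t"
  by (simp add: Sym_def)

lemma Sym_Nil: "[] \<in> Sym smul Bd d n"
  by (simp add: Sym_iff tens_in_def symE_def Ev_def)

lemma Sym_append: "x \<in> Sym smul Bd d n \<Longrightarrow> y \<in> Sym smul Bd d n \<Longrightarrow> x @ y \<in> Sym smul Bd d n"
  unfolding Sym_iff symE_def tens_in_def Ev_def by auto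

lemma Sym_scale: "x \<in> Sym smul Bd d n \<Longrightarrow> scale_t s x \<in> Sym smul Bd d n"
  unfolding Sym_iff symE_def Ev_scale by (auto simp: tens_in_def scale_t_def)

lemma Sym_S: "set w \<subseteq> Bd d \<Longrightarrow> (S w :: ('k::field, 'b::comm_ring_1) tens) \<in> Sym smul Bd d (length w)"
  unfolding Sym_iff using symE_S S_words by (fastforce simp: tens_in_def)

lemma Sym_single:
  fixes smul :: "'k::field \<Rightarrow> 'b::comm_ring_1 \<Rightarrow> 'b"
  shows "x \<in> Bd d \<Longrightarrow> [(1, [x])] \<in> Sym smul Bd d 1"
  unfolding Sym_iff symE_def
proof (intro conjI allI impI)
  fix L L' :: "('b \<Rightarrow> 'k) list" assume "mset L = mset L'"
  then show "Ev [(1, [x])] L = Ev [(1, [x])] L'"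
    unfolding Ev_x by (metis One_nat_def length_0_conv length_Suc_conv mset.simps mset_eq_length mset_eq_setD
        add_mset_eq_single list.sel(1))
qed (auto simp: tens_in_def)

lemma D_tens2_in: "is_Delta smul Bd D \<Longrightarrow> x \<in> Sym smul Bd d n \<Longrightarrow> tens2_in Bd d (D x)"
  unfolding is_Delta_def by blast

lemma D_teq: "is_Delta smul Bd D \<Longrightarrow> x \<in> Sym smul Bd d n \<Longrightarrow> y \<in> Sym smul Bd d n \<Longrightarrow>
   teq smul Bd d n x y \<Longrightarrow> teq2 smul Bd d (D x) (D y)"
  unfolding is_Delta_def by blast

lemma D_append: "is_Delta smul Bd D \<Longrightarrow> x \<in> Sym smul Bd d n \<Longrightarrow> y \<in> Sym smul Bd d n \<Longrightarrow>
   teq2 smul Bd d (D (x @ y)) (D x @ D y)"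
  unfolding is_Delta_def by blast

lemma D_scale: "is_Delta smul Bd D \<Longrightarrow> x \<in> Sym smul Bd d n \<Longrightarrow>
   teq2 smul Bd d (D (scale_t a x)) (scale_t2 a (D x))"
  unfolding is_Delta_def by blast

lemma D_one: "is_Delta smul Bd D \<Longrightarrow> teq2 smul Bd d (D [(1, [])]) [(1, [], [])]"
  unfolding is_Delta_def by blast

lemma D_single: "is_Delta smul Bd D \<Longrightarrow> w \<in> Bd d \<Longrightarrow> teq2 smul Bd d (D [(1, [w])]) [(1, [], [w]), (1, [w], [])]"
  unfolding is_Delta_def by blast

lemma D_shuf: "is_Delta smul Bd D \<Longrightarrow> x \<in> Sym smul Bd d n \<Longrightarrow> y \<in> Sym smul Bd d n' \<Longrightarrow>
   teq2 smul Bd d (D (shuf x y)) (mult2 (D x) (D y))"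
  unfolding is_Delta_def by blast

lemma teq2_E2: "teq2 smul Bd d X Y \<Longrightarrow> Lin smul Bd d L \<Longrightarrow> Lin smul Bd d M \<Longrightarrow> E2 X L M = E2 Y L M"
  unfolding teq2_iff by blast

lemma D_S:
  assumes D: "is_Delta smul Bd D" and w: "set w \<subseteq> Bd d"
    and L: "Lin smul Bd d L1" "Lin smul Bd d L2"
  shows "E2 (D (S w)) L1 L2 = Ev (S w) (L1 @ L2)"
  using w L
proof (induction w arbitrary: L1 L2)
  case Nil
  have "E2 (D (S [])) L1 L2 = E2 [(1, [], [])] L1 L2"
    using teq2_E2[OF D_one[OF D] Nil.prems(2,3)] by simp
  then show ?case by (simp add: Ev_def gl_def)
next
  case (Cons x w)
  have x: "x \<in> Bd d" and w': "set w \<subseteq> Bd d" using Cons.prems by auto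
  have "E2 (D (S (x # w))) L1 L2 = E2 (mult2 (D [(1, [x])]) (D (S w))) L1 L2"
    using teq2_E2[OF D_shuf[OF D Sym_single[of x Bd d smul, OF x] Sym_S[of w Bd d smul, OF w']] Cons.prems(2,3)] by simp
  also have "\<dots> = sum_list (map (\<lambda>bs1. sum_list (map (\<lambda>bs2.
     Ev [(1, [x])] (pick L1 bs1 True @ pick L2 bs2 True) * Ev (S w) (pick L1 bs1 False @ pick L2 bs2 False))
    (List.n_lists (length L2) [True, False]))) (List.n_lists (length L1) [True, False]))"
    unfolding E2_mult2
  proof (intro arg_cong[where f=sum_list] map_cong refl)
    fix bs1 bs2
    have l: "Lin smul Bd d (pick L1 bs1 t)" "Lin smul Bd d (pick L2 bs2 t)" for t
      using Lin_pick Cons.prems(2,3) by blast+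
    show "E2 (D [(1, [x])]) (pick L1 bs1 True) (pick L2 bs2 True) * E2 (D (S w)) (pick L1 bs1 False) (pick L2 bs2 False) =
        Ev [(1, [x])] (pick L1 bs1 True @ pick L2 bs2 True) * Ev (S w) (pick L1 bs1 False @ pick L2 bs2 False)"
      by (simp only: teq2_E2[OF D_single[OF D x] l(1,2)] E2_Delta_x Cons.IH[OF w' l(1,2)])
  qed
  also have "\<dots> = Ev (S (x # w)) (L1 @ L2)" by (rule Ev_S_Cons_split[symmetric])
  finally show ?case .
qed



definition aS :: "nat \<Rightarrow> ('k::field_char_0, 'b) tens \<Rightarrow> ('k, 'b) tens" where
  "aS N a = concat (map (\<lambda>(c, w). scale_t (c / fact N) (S w)) a)"

lemma aS_Cons[simp]: "aS N ((c, w) # a) = scale_t (c / fact N) (S w) @ aS N a"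
  by (simp add: aS_def)

lemma aS_Nil[simp]: "aS N [] = []"
  by (simp add: aS_def)

lemma aS_Sym: "\<forall>(c, w)\<in>set a. length w = N \<and> set w \<subseteq> Bd d \<Longrightarrow>
   (aS N a :: ('k::field_char_0, 'b::comm_ring_1) tens) \<in> Sym smul Bd d N"
proof (induction a)
  case Nil then show ?case by (simp add: Sym_Nil)
next
  case (Cons x a)
  obtain c w where x: "x = (c, w)" by fastforce
  have "S w \<in> Sym smul Bd d N" using Cons.prems Sym_S[of w Bd d smul] by (auto simp: x)
  then show ?case using Cons by (auto simp: x intro!: Sym_append Sym_scale)
qed

lemma sum_div: "sum_list (map (\<lambda>(c, w). c / f * g w) a) = sum_list (map (\<lambda>(c, w). c * g w) a) / (f :: 'k::field)"
  by (induction a) (auto simp: add_divide_distrib)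

lemma Ev_aS: "Ev (aS N a) L = Phi a L / fact N"
proof -
  have "Ev (aS N a) L = sum_list (map (\<lambda>(c, w). c / fact N * Ev (S w) L) a)"
    by (induction a) (auto simp: Ev_scale[unfolded Ev_def] Ev_def)
  then show ?thesis unfolding Phi_def sum_div by simp
qed

lemma D_aS:
  assumes D: "is_Delta smul Bd D"
  shows "\<forall>(c, w)\<in>set a. length w = N \<and> set w \<subseteq> Bd d \<Longrightarrow> Lin smul Bd d L1 \<Longrightarrow> Lin smul Bd d L2 \<Longrightarrow>
   E2 (D (aS N a)) L1 L2 = sum_list (map (\<lambda>(c, w). c / fact N * E2 (D (S w)) L1 L2) a)"
proof (induction a)
  case Nil
  have "E2 (D ([] @ [])) L1 L2 = E2 (D [] @ D []) L1 L2"
    using teq2_E2[OF D_append[OF D Sym_Nil Sym_Nil] Nil.prems(2,3)] by blast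
  then show ?case by simp
next
  case (Cons x a)
  obtain c w where x: "x = (c, w)" by fastforce
  have Sw: "S w \<in> Sym smul Bd d N" using Cons.prems Sym_S[of w Bd d smul] by (auto simp: x)
  have Sa: "aS N a \<in> Sym smul Bd d N" using Cons.prems aS_Sym[of a N Bd d smul] by auto
  have "E2 (D (aS N (x # a))) L1 L2 = E2 (D (scale_t (c / fact N) (S w)) @ D (aS N a)) L1 L2"
    using teq2_E2[OF D_append[OF D Sym_scale[OF Sw] Sa] Cons.prems(2,3)] by (simp add: x)
  also have "\<dots> = c / fact N * E2 (D (S w)) L1 L2 + E2 (D (aS N a)) L1 L2"
    using teq2_E2[OF D_scale[OF D Sw] Cons.prems(2,3)] by (simp add: E2_scale)
  finally show ?case using Cons by (simp add: x)
qed

lemma D_core: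
  fixes smul :: "'k::field_char_0 \<Rightarrow> 'b::comm_ring_1 \<Rightarrow> 'b"
  assumes D: "is_Delta smul Bd D" and a: "a \<in> Sym smul Bd d N"
    and L: "Lin smul Bd d L1" "Lin smul Bd d L2"
  shows "E2 (D a) L1 L2 = Ev a (L1 @ L2)"
proof -
  have ti: "tens_in Bd d N a" and sa: "symE smul Bd d a" using a by (auto simp: Sym_iff)
  have words: "\<forall>(c, w)\<in>set a. length w = N \<and> set w \<subseteq> Bd d" using ti by (auto simp: tens_in_def)
  have len: "\<forall>(c, w)\<in>set a. length w = N" using words by auto
  have a': "aS N a \<in> Sym smul Bd d N" by (rule aS_Sym[of a N Bd d smul, OF words])
  have fz: "(fact N :: 'k) \<noteq> 0" by simp
  have "teq smul Bd d N a (aS N a)" unfolding teq_iff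
  proof (intro conjI allI impI ti)
    show "tens_in Bd d N (aS N a)" using a' by (simp add: Sym_def)
    fix L assume "Lin smul Bd d L" "length L = N"
    then show "Ev a L = Ev (aS N a) L" using Phi_fact[OF len sa] fz by (simp add: Ev_aS)
  qed
  then have "E2 (D a) L1 L2 = E2 (D (aS N a)) L1 L2"
    using teq2_E2[OF D_teq[OF D a a'] L] by blast
  also have "\<dots> = sum_list (map (\<lambda>(c, w). c / fact N * E2 (D (S w)) L1 L2) a)"
    by (rule D_aS[OF D words L])
  also have "\<dots> = sum_list (map (\<lambda>(c, w). c / fact N * Ev (S w) (L1 @ L2)) a)"
    using words D_S[OF D _ L] by (intro arg_cong[where f=sum_list] map_cong refl) auto
  also have "\<dots> = Phi a (L1 @ L2) / fact N" unfolding Phi_def sum_div ..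
  also have "\<dots> = Ev a (L1 @ L2)"
    using Phi_fact[OF len sa, of "L1 @ L2"] L fz by (simp add: Lin_append)
  finally show ?thesis .
qed



lemma graded_mult_all: "graded_alg smul Bd \<Longrightarrow> \<forall>i j. \<forall>x\<in>Bd i. \<forall>y\<in>Bd j. x * y \<in> Bd (i + j)"
  unfolding graded_alg_def by (elim conjE) assumption

lemma graded_smul_all: "graded_alg smul Bd \<Longrightarrow> \<forall>c x y. smul c (x * y) = smul c x * y"
  unfolding graded_alg_def by (elim conjE) assumption

lemma graded_mult: "graded_alg smul Bd \<Longrightarrow> x \<in> Bd i \<Longrightarrow> y \<in> Bd j \<Longrightarrow> x * y \<in> Bd (i + j)"
  using graded_mult_all by blast

lemma graded_smul_mult: "graded_alg smul Bd \<Longrightarrow> smul c (x * y) = smul c x * y"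
  using graded_smul_all by blast

lemma lin_mult:
  assumes G: "graded_alg smul Bd" and \<phi>: "lin_fun smul Bd (e + d) \<phi>" and y: "y \<in> Bd d"
  shows "lin_fun smul Bd e (\<lambda>x. \<phi> (x * y))"
proof -
  have add: "\<forall>a\<in>Bd (e + d). \<forall>b\<in>Bd (e + d). \<phi> (a + b) = \<phi> a + \<phi> b"
    and sm: "\<forall>c. \<forall>a\<in>Bd (e + d). \<phi> (smul c a) = c * \<phi> a"
    using \<phi> unfolding lin_fun_def by blast+
  have m: "x * y \<in> Bd (e + d)" if "x \<in> Bd e" for x using graded_mult[OF G that y] .
  show ?thesis unfolding lin_fun_def
  proof (intro conjI ballI allI)
    fix x x' assume x: "x \<in> Bd e" "x' \<in> Bd e"
    have "\<phi> ((x + x') * y) = \<phi> (x * y + x' * y)" by (simp only: distrib_right)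
    also have "\<dots> = \<phi> (x * y) + \<phi> (x' * y)" using add m[OF x(1)] m[OF x(2)] by blast
    finally show "\<phi> ((x + x') * y) = \<phi> (x * y) + \<phi> (x' * y)" .
  next
    fix c x assume x: "x \<in> Bd e"
    have "\<phi> (smul c x * y) = \<phi> (smul c (x * y))" using graded_smul_mult[OF G] by metis
    also have "\<dots> = c * \<phi> (x * y)" using sm m[OF x] by blast
    finally show "\<phi> (smul c x * y) = c * \<phi> (x * y)" .
  qed
qed

lemma mb_Cons: "mb (y # z) (\<phi> # L) = (\<lambda>x. \<phi> (x * y)) # mb z L"
  by (simp add: mb_def)

lemma Lin_mb:
  assumes G: "graded_alg smul Bd"
  shows "Lin smul Bd (e + d) L \<Longrightarrow> set z \<subseteq> Bd d \<Longrightarrow> Lin smul Bd e (mb z L)"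
proof (induction L arbitrary: z)
  case Nil then show ?case by (simp add: mb_def Lin_def)
next
  case (Cons \<phi> L)
  show ?case
  proof (cases z)
    case Nil then show ?thesis by (simp add: mb_def Lin_def)
  next
    case zc: (Cons y z')
    have l1: "lin_fun smul Bd (e + d) \<phi>" and l2: "Lin smul Bd (e + d) L"
      using Cons.prems(1) unfolding Lin_def by simp_all
    have y: "y \<in> Bd d" and z': "set z' \<subseteq> Bd d" using Cons.prems(2) zc by simp_all
    have "lin_fun smul Bd e (\<lambda>x. \<phi> (x * y))" by (rule lin_mult[OF G l1 y])
    moreover have "Lin smul Bd e (mb z' L)" by (rule Cons.IH[OF l2 z'])
    ultimately show ?thesis unfolding zc mb_Cons Lin_def by simp
  qed
qed

lemma mset_mb_merge: "count_list bs True = length u \<Longrightarrow> count_list bs False = length v \<Longrightarrow>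
  length L = length bs \<Longrightarrow>
  mset (mb (merge bs u v) L) = mset (mb u (pick L bs True)) + mset (mb v (pick L bs False))"
proof (induction bs arbitrary: u v L)
  case Nil then show ?case by (simp add: mb_def)
next
  case (Cons b bs)
  from Cons.prems obtain \<phi> L' where L: "L = \<phi> # L'" by (cases L) auto
  show ?case
  proof (cases b)
    case True
    with Cons.prems obtain x u' where u: "u = x # u'" by (cases u) auto
    have "mset (mb (merge bs u' v) L') = mset (mb u' (pick L' bs True)) + mset (mb v (pick L' bs False))"
      using Cons.prems True u L by (intro Cons.IH) simp_all
    then show ?thesis using True u L by (simp add: mb_def)
  next
    case False
    with Cons.prems obtain x v' where v: "v = x # v'" by (cases v) auto
    have "mset (mb (merge bs u v') L') = mset (mb u (pick L' bs True)) + mset (mb v' (pick L' bs False))"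
      using Cons.prems False v L by (intro Cons.IH) simp_all
    then show ?thesis using False v L by (simp add: mb_def)
  qed
qed



lemma inner_sel:
  fixes smul :: "'k::field_char_0 \<Rightarrow> 'b::comm_ring_1 \<Rightarrow> 'b"
  assumes G: "graded_alg smul Bd" and D: "is_Delta smul Bd D" and a: "a \<in> Sym smul Bd e (n + m)"
    and L: "Lin smul Bd (e + d) L" "length L = n + m"
    and u: "length u = m" "set u \<subseteq> Bd d" and v: "length v = n" "set v \<subseteq> Bd d"
  shows "sum_list (map (\<lambda>bs. if length (merge bs u v) = length L then Ev a (mb (merge bs u v) L) else 0)
            (sel (length u) (length v)))
       = sum_list (map (\<lambda>bs. if count_list bs True = m \<and> count_list bs False = n
            then E2 (D a) (mb u (pick L bs True)) (mb v (pick L bs False)) else 0)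
            (List.n_lists (length L) [True, False]))"
proof -
  have sa: "symE smul Bd e a" using a by (simp add: Sym_iff)
  have nl: "List.n_lists (length u + length v) [True, False] = List.n_lists (length L) [True, False]"
    using u v L by (simp add: add.commute)
  show ?thesis unfolding sel_def sum_list_filter_if nl
  proof (intro arg_cong[where f=sum_list] map_cong refl)
    fix bs assume "bs \<in> set (List.n_lists (length L) [True, False])"
    then have bs: "length bs = length L" "set bs \<subseteq> {True, False}" by (auto simp: set_n_lists)
    have c: "count_list bs True + count_list bs False = n + m" using count_TF[OF bs(2)] bs(1) L(2) by simp
    show "(if count_list bs True = length u then
            if length (merge bs u v) = length L then Ev a (mb (merge bs u v) L) else 0 else 0) =
          (if count_list bs True = m \<and> count_list bs False = n
            then E2 (D a) (mb u (pick L bs True)) (mb v (pick L bs False)) else 0)"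
    proof (cases "count_list bs True = m")
      case True
      have F: "count_list bs False = length v" using c True v by simp
      have T: "count_list bs True = length u" using True u by simp
      have lm: "length (merge bs u v) = length L" using length_merge[OF T F] bs by simp
      have linm: "Lin smul Bd e (mb (merge bs u v) L)"
        using Lin_mb[OF G L(1)] set_merge[of bs u v] u v by blast
      have ms: "mset (mb (merge bs u v) L) = mset (mb u (pick L bs True) @ mb v (pick L bs False))"
        using mset_mb_merge[OF T F bs(1)[symmetric]] by simp
      have l1: "Lin smul Bd e (mb u (pick L bs True))"
        using Lin_mb[OF G Lin_pick[OF L(1)] u(2)] by blast
      have l2: "Lin smul Bd e (mb v (pick L bs False))"
        using Lin_mb[OF G Lin_pick[OF L(1)] v(2)] by blast
      have "Ev a (mb (merge bs u v) L) = Ev a (mb u (pick L bs True) @ mb v (pick L bs False))"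
        using sa linm ms unfolding symE_def by blast
      also have "\<dots> = E2 (D a) (mb u (pick L bs True)) (mb v (pick L bs False))"
        using D_core[OF D a l1 l2] by simp
      finally show ?thesis using T F lm u v by simp
    next
      case False
      then show ?thesis using u by simp
    qed
  qed
qed

lemma final_eval:
  fixes smul :: "'k::field_char_0 \<Rightarrow> 'b::comm_ring_1 \<Rightarrow> 'b"
  assumes G: "graded_alg smul Bd" and D: "is_Delta smul Bd D" and a: "a \<in> Sym smul Bd e (n + m)"
    and b: "tens_in Bd d m b" and f: "tens_in Bd d n f"
    and L: "Lin smul Bd (e + d) L" "length L = n + m"
  shows "Ev (star a (shuf b f)) L = Ev (mu (star2 (D a) b f)) L"
proof -
  define Nl where "Nl = List.n_lists (length L) [True, False]"
  define Gf where "Gf = (\<lambda>bs u v. E2 (D a) (mb u (pick L bs True)) (mb v (pick L bs False)))"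
  define P where "P = (\<lambda>x1 x2 bs. fst x1 * fst x2 * (if count_list bs True = m \<and> count_list bs False = n
            then Gf bs (snd x1) (snd x2) else 0))"
  have bw: "length u = m \<and> set u \<subseteq> Bd d" if "(c, u) \<in> set b" for c u
    using b that by (auto simp: tens_in_def)
  have fw: "length v = n \<and> set v \<subseteq> Bd d" if "(c, v) \<in> set f" for c v
    using f that by (auto simp: tens_in_def)
  have "Ev (star a (shuf b f)) L =
     EvG (\<lambda>z. if length z = length L then Ev a (mb z L) else 0) (shuf b f)"
    unfolding EvG_star EvG_def by simp
  also have "\<dots> = sum_list (map (\<lambda>x1. sum_list (map (\<lambda>x2. sum_list (map (\<lambda>bs. P x1 x2 bs) Nl)) f)) b)"
    unfolding EvG_shuf
  proof (rule arg_cong[where f=sum_list], rule map_cong[OF refl])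
    fix x1 assume x1: "x1 \<in> set b"
    obtain c1 u where x1e: "x1 = (c1, u)" by fastforce
    have u: "length u = m" "set u \<subseteq> Bd d" using bw x1 x1e by auto
    have "(\<Sum>(c', v)\<leftarrow>f. c1 * c' * (\<Sum>bs\<leftarrow>sel (length u) (length v).
             if length (merge bs u v) = length L then Ev a (mb (merge bs u v) L) else 0)) =
          (\<Sum>x2\<leftarrow>f. sum_list (map (P x1 x2) Nl))"
    proof (rule arg_cong[where f=sum_list], rule map_cong[OF refl])
      fix x2 assume x2: "x2 \<in> set f"
      obtain c2 v where x2e: "x2 = (c2, v)" by fastforce
      have v: "length v = n" "set v \<subseteq> Bd d" using fw x2 x2e by auto
      show "(case x2 of (c', v) \<Rightarrow> c1 * c' * (\<Sum>bs\<leftarrow>sel (length u) (length v).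
             if length (merge bs u v) = length L then Ev a (mb (merge bs u v) L) else 0)) =
           sum_list (map (P x1 x2) Nl)"
        unfolding x2e prod.case inner_sel[OF G D a L u v] P_def Gf_def Nl_def x1e snd_conv fst_conv
        by (simp add: const_mult_sum_list)
    qed
    then show "(case x1 of (c, u) \<Rightarrow> \<Sum>(c', v)\<leftarrow>f. c * c' * (\<Sum>bs\<leftarrow>sel (length u) (length v).
             if length (merge bs u v) = length L then Ev a (mb (merge bs u v) L) else 0)) =
          (\<Sum>x2\<leftarrow>f. sum_list (map (P x1 x2) Nl))"
      unfolding x1e by simp
  qed
  also have "\<dots> = sum_list (map (\<lambda>x1. sum_list (map (\<lambda>bs. sum_list (map (\<lambda>x2. P x1 x2 bs) f)) Nl)) b)"
    by (rule arg_cong[where f=sum_list], rule map_cong[OF refl], rule sum_list_swap)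
  also have "\<dots> = sum_list (map (\<lambda>bs. sum_list (map (\<lambda>x1. sum_list (map (\<lambda>x2. P x1 x2 bs) f)) b)) Nl)"
    by (rule sum_list_swap)
  also have "\<dots> = Ev (mu (star2 (D a) b f)) L"
    unfolding Ev_mu Nl_def[symmetric] E2_star2
  proof (rule arg_cong[where f=sum_list], rule map_cong[OF refl], rule arg_cong[where f=sum_list],
         rule map_cong[OF refl], rule arg_cong[where f=sum_list], rule map_cong[OF refl])
    fix bs x1 x2 assume bs: "bs \<in> set Nl" and x1: "x1 \<in> set b" and x2: "x2 \<in> set f"
    have lb: "length bs = length L" using bs by (simp add: Nl_def set_n_lists)
    have l1: "length (snd x1) = m" using bw[of "fst x1" "snd x1"] x1 by simp
    have l2: "length (snd x2) = n" using fw[of "fst x2" "snd x2"] x2 by simp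
    show "P x1 x2 bs = fst x1 * fst x2 *
          (if length (snd x1) = length (pick L bs True) \<and> length (snd x2) = length (pick L bs False)
           then E2 (D a) (mb (snd x1) (pick L bs True)) (mb (snd x2) (pick L bs False)) else 0)"
      unfolding P_def Gf_def length_pick[OF lb] l1 l2 by auto
  qed
  finally show ?thesis .
qed

lemma star_words: "(c, z) \<in> set (star A B) \<Longrightarrow> \<exists>c1 w c2 v. (c1, w) \<in> set A \<and> (c2, v) \<in> set B \<and>
   length w = length v \<and> z = map2 (*) w v"
  unfolding star_def by (auto split: if_splits)

lemma star2_mem: "(c, u, v) \<in> set (star2 Y b f) \<Longrightarrow> \<exists>c0 u0 v0 c1 c2. (c0, u0, v0) \<in> set Y \<and>
   (c1, u) \<in> set (star [(1, u0)] b) \<and> (c2, v) \<in> set (star [(1, v0)] f)"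
  unfolding star2_def by fastforce

lemma mu_mem: "(c, z) \<in> set (mu X) \<Longrightarrow> \<exists>c' u v. (c', u, v) \<in> set X \<and> (c, z) \<in> set (shuf [(c', u)] [(1, v)])"
  unfolding mu_def by fastforce

lemma map2_Bd: "graded_alg smul Bd \<Longrightarrow> set w \<subseteq> Bd e \<Longrightarrow> set v \<subseteq> Bd d \<Longrightarrow> set (map2 (*) w v) \<subseteq> Bd (e + d)"
  by (auto dest: set_zip_leftD set_zip_rightD intro: graded_mult)

theorem lemma3p5:
  fixes smul :: "'k::field_char_0 \<Rightarrow> 'b::comm_ring_1 \<Rightarrow> 'b"
    and Bd :: "nat \<Rightarrow> 'b set"
    and D :: "('k, 'b) tens \<Rightarrow> ('k, 'b) tens2"
    and f b a :: "('k, 'b) tens"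
    and d e n m :: nat
  assumes "graded_alg smul Bd"
    and "is_Delta smul Bd D"
    and "f \<in> Sym smul Bd d n"
    and "b \<in> Sym smul Bd d m"
    and "a \<in> Sym smul Bd e (n + m)"
  shows "teq smul Bd (e + d) (n + m) (star a (shuf b f)) (mu (star2 (D a) b f))"
proof -
  note G = assms(1) and D = assms(2) and fS = assms(3) and bS = assms(4) and aS = assms(5)
  have ta: "tens_in Bd e (n + m) a" and tb: "tens_in Bd d m b" and tf: "tens_in Bd d n f"
    using fS bS aS by (auto simp: Sym_def)
  have t2: "tens2_in Bd e (D a)" by (rule D_tens2_in[OF D aS])
  have sw: "length z = m + n \<and> set z \<subseteq> Bd d" if h0: "(c, z) \<in> set (shuf b f)" for c z
  proof -
    obtain c1 u c2 v where h: "(c1, u) \<in> set b" "(c2, v) \<in> set f"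
      "length z = length u + length v" "set z \<subseteq> set u \<union> set v"
      using shuf_words[OF h0] by blast
    have "length u = m \<and> set u \<subseteq> Bd d" using h(1) tb by (auto simp: tens_in_def)
    moreover have "length v = n \<and> set v \<subseteq> Bd d" using h(2) tf by (auto simp: tens_in_def)
    ultimately show ?thesis using h(3,4) by auto
  qed
  have tl: "tens_in Bd (e + d) (n + m) (star a (shuf b f))"
    unfolding tens_in_def
  proof (intro ballI, clarify)
    fix c z assume "(c, z) \<in> set (star a (shuf b f))"
    then obtain c1 w c2 v where h: "(c1, w) \<in> set a" "(c2, v) \<in> set (shuf b f)"
      "length w = length v" "z = map2 (*) w v" using star_words by blast
    have w: "length w = n + m" "set w \<subseteq> Bd e" using h(1) ta by (auto simp: tens_in_def)
    have v: "length v = m + n" "set v \<subseteq> Bd d" using sw[OF h(2)] by auto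
    show "length z = n + m \<and> set z \<subseteq> Bd (e + d)"
      using h(4) w v map2_Bd[OF G w(2) v(2)] by simp
  qed
  have sw2: "length u = m \<and> length v = n \<and> set u \<subseteq> Bd (e + d) \<and> set v \<subseteq> Bd (e + d)"
    if h0: "(c, u, v) \<in> set (star2 (D a) b f)" for c u v
  proof -
    obtain c0 u0 v0 c1 c2 where h: "(c0, u0, v0) \<in> set (D a)"
      "(c1, u) \<in> set (star [(1, u0)] b)" "(c2, v) \<in> set (star [(1, v0)] f)"
      using star2_mem[OF h0] by blast
    have uv0: "set u0 \<subseteq> Bd e" "set v0 \<subseteq> Bd e" using h(1) t2 by (auto simp: tens2_in_def)
    obtain c1' w1 c1'' u' where hu: "(c1', w1) \<in> set [(1::'k, u0)]" "(c1'', u') \<in> set b"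
      "length w1 = length u'" "u = map2 (*) w1 u'" using star_words[OF h(2)] by blast
    obtain c2' w2 c2'' v' where hv: "(c2', w2) \<in> set [(1::'k, v0)]" "(c2'', v') \<in> set f"
      "length w2 = length v'" "v = map2 (*) w2 v'" using star_words[OF h(3)] by blast
    have u': "length u' = m" "set u' \<subseteq> Bd d" using hu(2) tb by (auto simp: tens_in_def)
    have v': "length v' = n" "set v' \<subseteq> Bd d" using hv(2) tf by (auto simp: tens_in_def)
    have "set u \<subseteq> Bd (e + d)" using hu map2_Bd[OF G _ u'(2), of w1 e] uv0 by auto
    moreover have "set v \<subseteq> Bd (e + d)" using hv map2_Bd[OF G _ v'(2), of w2 e] uv0 by auto
    ultimately show ?thesis using hu(3,4) hv(3,4) u' v' by simp
  qed
  have tr: "tens_in Bd (e + d) (n + m) (mu (star2 (D a) b f))"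
    unfolding tens_in_def
  proof (intro ballI, clarify)
    fix c z assume "(c, z) \<in> set (mu (star2 (D a) b f))"
    then obtain c' u v where h: "(c', u, v) \<in> set (star2 (D a) b f)" "(c, z) \<in> set (shuf [(c', u)] [(1, v)])"
      using mu_mem by blast
    obtain c1 u1 c2 v1 where h2: "(c1, u1) \<in> set [(c', u)]" "(c2, v1) \<in> set [(1::'k, v)]"
      "length z = length u1 + length v1" "set z \<subseteq> set u1 \<union> set v1"
      using shuf_words[OF h(2)] by blast
    show "length z = n + m \<and> set z \<subseteq> Bd (e + d)" using h2 sw2[OF h(1)] by auto
  qed
  show ?thesis unfolding teq_iff
  proof (intro conjI allI impI tl tr)
    fix L assume "Lin smul Bd (e + d) L" "length L = n + m"
    then show "Ev (star a (shuf b f)) L = Ev (mu (star2 (D a) b f)) L"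
      by (rule final_eval[OF G D aS tb tf])
  qed
qed


end
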